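(* Let $(\mathfrak M,\mathscr A)$ be a quasi-differentiable Banach manifold modelled on $X$ with $C^1$-kernel $\mathfrak M_0$, and let $\eta\in\mathfrak M_0$. Then: (1) the map $\varphi'(\eta):\mathcal T_\eta(\mathfrak M)\to X$ is well defined, i.e. for $\upsilon=f'(0)$ the value $(\varphi\circ\psi^{-1})'(\psi(\eta))(\psi\circ f)'(0)$ does not depend on the choice of the curve $f$ with $f'(0)=\upsilon$ nor on the $\mathfrak M_0$-regular chart $\psi$ at $\eta$ with $\psi\circ f$ continuously differentiable at $0$; (2) for any two $\mathfrak M_0$-regular charts $(\mathcal U,\varphi),(\mathcal V,\psi)$ at $\eta$ there are constants $C_1,C_2>0$ with $\|\upsilon\|_\psi\le C_1\|\upsilon\|_\varphi$ and $\|\upsilon\|_\varphi\le C_2\|\upsilon\|_\psi$ for all $\upsilon\in\mathcal T^{00}_\eta(\mathfrak M)$; (3) for every $\mathfrak M_0$-regular chart $(\mathcal U,\varphi)$ at $\eta$, $\varphi'(\eta):\mathcal T_\eta(\mathfrak M)\to X$ is a bijection.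
   Context: Densely embedded spaces and the class $\mathfrak C^k$. For Banach spaces $X$ and $X_0$, $X_0$ is a densely embedded Banach subspace of $X$ if $X_0$ is a dense linear subspace of $X$ and there is $C>0$ with $\|x\|_X\le C\|x\|_{X_0}$ for $x\in X_0$. For such $X_0\subseteq X$, a Banach space $Y$, an open set $U_0\subseteq X_0$ and an integer $k\ge1$, $\mathfrak C^k(U_0;X,Y)$ denotes the set of maps $F:U_0\to Y$ such that (i) for each $x_0\in U_0$ there are bounded symmetric $j$-linear maps $F^{(j)}(x_0):X^j\to Y$, $1\le j\le k$, with $\|F(x)-F(x_0)-\sum_{j=1}^k\frac1{j!}F^{(j)}(x_0)(x-x_0,\dots,x-x_0)\|_Y/\|x-x_0\|_{X_0}^k\to0$ as $\|x-x_0\|_{X_0}\to0$, and (ii) $x\mapsto F^{(j)}(x)$ is continuous from $U_0$ (with the $X_0$-topology) into the space $L^j(X,Y)$ of bounded $j$-linear maps. We write $F'=F^{(1)}$. Embedded submanifolds and quasi-differentiable manifolds. Let $\mathfrak M,\mathfrak M_0$ be topological Banach manifolds modelled on $X$, $X_0$, let $\mathscr A$ be a family of local charts of $\mathfrak M$, and $k\ge1$. $\mathfrak M_0$ is a $C^k$-embedded Banach submanifold of $\mathfrak M$ with respect to $\mathscr A$ if: (D1) $X_0$ is a densely embedded Banach subspace of $X$; (D2) $\mathfrak M_0\subseteq\mathfrak M$ and $\mathcal U\cap\mathfrak M_0$ is open in $\mathfrak M_0$ for every open $\mathcal U\subseteq\mathfrak M$; (D3) the domains of the charts of $\mathscr A$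 cover $\mathfrak M$; (D4) for $\eta\in\mathfrak M_0$ and $(\mathcal U,\varphi)\in\mathscr A$ with $\eta\in\mathcal U$, $(\mathcal U_0,\varphi|_{\mathcal U_0})$ with $\mathcal U_0:=\mathcal U\cap\mathfrak M_0$ is a local chart of $\mathfrak M_0$; (D5) for $\eta\in\mathfrak M_0$ and $(\mathcal U,\varphi),(\mathcal V,\psi)\in\mathscr A$ with $\eta\in\mathcal U\cap\mathcal V$, $\psi\circ\varphi^{-1}\in\mathfrak C^k(\varphi(\mathcal U_0\cap\mathcal V_0);X,X)$ and $\varphi\circ\psi^{-1}\in\mathfrak C^k(\psi(\mathcal U_0\cap\mathcal V_0);X,X)$. A chart of $\mathscr A$ whose domain contains $\eta$ is an $\mathfrak M_0$-regular local chart at $\eta$. $(\mathfrak M,\mathfrak M_0,\mathscr A)$ (with $\mathfrak M_0$ $C^1$-embedded) is inward spreadable if there is a Banach manifold $\mathfrak M_1\subseteq\mathfrak M_0$, modelled on a Banach space $X_1$, which is a $C^1$-embedded Banach submanifold of $\mathfrak M_0$ with respect to the restrictions to $\mathfrak M_0$ of the charts of $\mathscr A$ ($\mathfrak M_1$ is then an inner $C^1$-kernel and the charts of $\mathscr A$ are called $(\mathfrak M_0,\mathfrak M_1)$-regular). It is outward spreadable if there is a Banach manifold $\widetilde{\mathfrak M}\supseteq\mathfrak M$ with a chart family $\widetilde{\mathscr A}$ whose restrictions to $\mathfrak M$ form $\mathscr A$, such that $\mathfrak M$ is a $C^1$-embedded Banach submanifold of $\widetilde{\mathfrak M}$ with respect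 to $\widetilde{\mathscr A}$ ($\widetilde{\mathfrak M}$ is a shell). If both hold, $(\mathfrak M,\mathscr A)$ is a quasi-differentiable Banach manifold with $C^1$-kernel $\mathfrak M_0$. For charts at $\eta\in\mathfrak M_0$, $(\varphi\circ\psi^{-1})'(\psi(\eta))\in L(X)$ is the first derivative in the $\mathfrak C^1$ sense. Tangent vectors. Let $\eta\in\mathfrak M_0$. $\dot{\mathscr D}^{1s}_\eta$ is the set of real functions $F$ defined on a neighbourhood of $\eta$ in $\mathfrak M$ for which there is a neighbourhood $\mathcal O'$ of $\eta$ in $\mathfrak M$ such that for every $\mathfrak M_0$-regular chart $(\mathcal U,\varphi)$ at $\eta$, $F\circ\varphi^{-1}$ is Fréchet differentiable in the norm of $X$ on $\varphi(\mathcal O'\cap\mathcal U)$ with derivative continuous into $X^*$. A curve $f:(-\varepsilon,\varepsilon)\to\mathfrak M$ with $f(0)=\eta$ is continuously differentiable at $t=0$ if (after shrinking $\varepsilon$) there is an $\mathfrak M_0$-regular chart $(\mathcal U,\varphi)$ at $\eta$ with $t\mapsto\varphi(f(t))$ continuously differentiable on $(-\varepsilon,\varepsilon)$ in $X$, and $(\psi\circ f)'(0)=(\psi\circ\varphi^{-1})'(\varphi(\eta))(\varphi\circ f)'(0)$ for every $\mathfrak M_0$-regular chart $\psi$ at $\eta$ with $\psi\circ f$ continuously differentiable at $0$ in $X$. Its tangent vector is $f'(0):\dot{\mathscr D}^{1s}_\eta\to\mathbb R$, $f'(0)F=(F\circ f)'(0)$. $\mathcal T_\eta(\mathfrak M)$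 is the set of all such $f'(0)$. For an $\mathfrak M_0$-regular chart $\varphi$ at $\eta$, $\varphi'(\eta)\upsilon:=(\varphi\circ\psi^{-1})'(\psi(\eta))(\psi\circ f)'(0)$ for $\upsilon=f'(0)$, where $\psi$ is an $\mathfrak M_0$-regular chart at $\eta$ with $\psi\circ f$ continuously differentiable at $0$ in $X$; $\|\upsilon\|_\varphi:=\|\varphi'(\eta)\upsilon\|_X$. $\mathcal T^{00}_\eta(\mathfrak M)$ is the set of $f'(0)$ for curves $f:(-\varepsilon,\varepsilon)\to\mathfrak M_0$, $f(0)=\eta$, such that (after shrinking $\varepsilon$) for every $\mathfrak M_0$-regular chart $\varphi$ at $\eta$, $t\mapsto\varphi(f(t))$ is continuously differentiable on $(-\varepsilon,\varepsilon)$ in the norm of $X_0$. *)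

theory Defs
  imports "HOL-Analysis.Analysis"
begin

text \<open>A densely embedded Banach subspace X0 of X is represented by a Banach space
  type together with an injective bounded linear map j into X with dense range.\<close>

definition dense_embedding :: "('a::real_normed_vector \<Rightarrow> 'b::real_normed_vector) \<Rightarrow> bool" where
  "dense_embedding j \<longleftrightarrow> bounded_linear j \<and> inj j \<and> closure (range j) = UNIV"

definition frakC1 ::
  "('x0::real_normed_vector \<Rightarrow> 'x::real_normed_vector) \<Rightarrow> 'x0 set \<Rightarrow> ('x0 \<Rightarrow> 'y::real_normed_vector) \<Rightarrow> bool" where
  "frakC1 j U0 F \<longleftrightarrow>
     (\<exists>F' :: 'x0 \<Rightarrow> ('x \<Rightarrow>\<^sub>L 'y).
        (\<forall>x0\<in>U0. ((\<lambda>x. norm (F x - F x0 - blinfun_apply (F' x0) (j (x - x0))) / norm (x - x0))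
                     \<longlongrightarrow> 0) (at x0 within U0))
      \<and> continuous_on U0 F')"

text \<open>The first derivative in the C^1 sense (unique since j has dense range).\<close>
definition frakC1_deriv ::
  "('x0::real_normed_vector \<Rightarrow> 'x::real_normed_vector) \<Rightarrow> 'x0 set \<Rightarrow> ('x0 \<Rightarrow> 'y::real_normed_vector)
    \<Rightarrow> 'x0 \<Rightarrow> ('x \<Rightarrow>\<^sub>L 'y)" where
  "frakC1_deriv j U0 F x0 =
     (THE D. ((\<lambda>x. norm (F x - F x0 - blinfun_apply D (j (x - x0))) / norm (x - x0))
                     \<longlongrightarrow> 0) (at x0 within U0))"

definition local_chart :: "'p topology \<Rightarrow> 'p set \<Rightarrow> ('p \<Rightarrow> 'x::real_normed_vector) \<Rightarrow> bool" where
  "local_chart T U \<phi> \<longleftrightarrow> openin T U \<and> open (\<phi> ` U) \<and>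
     homeomorphic_map (subtopology T U) (top_of_set (\<phi> ` U)) \<phi>"

definition top_banach_manifold :: "'p topology \<Rightarrow> 'x::banach itself \<Rightarrow> bool" where
  "top_banach_manifold T (TYPE('x)) \<longleftrightarrow>
     (\<forall>p\<in>topspace T. \<exists>U (\<phi>::'p \<Rightarrow> 'x). p \<in> U \<and> local_chart T U \<phi>)"

text \<open>The restriction of an X-valued chart to M0, read as an X0-valued map.\<close>
definition chart0 :: "('x0 \<Rightarrow> 'x) \<Rightarrow> ('p \<Rightarrow> 'x) \<Rightarrow> 'p \<Rightarrow> 'x0" where
  "chart0 j \<phi> = (\<lambda>p. inv j (\<phi> p))"

definition trans_map :: "('x0 \<Rightarrow> 'x) \<Rightarrow> 'p set \<Rightarrow> ('p \<Rightarrow> 'x) \<Rightarrow> ('p \<Rightarrow> 'y) \<Rightarrow> 'x0 \<Rightarrow> 'y" where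
  "trans_map j U \<phi> \<psi> = (\<lambda>z. \<psi> (inv_into U \<phi> (j z)))"

definition trans_dom :: "'p topology \<Rightarrow> ('x0 \<Rightarrow> 'x) \<Rightarrow> 'p set \<Rightarrow> ('p \<Rightarrow> 'x) \<Rightarrow> 'p set \<Rightarrow> 'x0 set" where
  "trans_dom T0 j U \<phi> V = chart0 j \<phi> ` (U \<inter> V \<inter> topspace T0)"

text \<open>M0 (topology T0, modelled on 'x0 via j) is a C^1-embedded Banach submanifold of
  M (topology T, modelled on 'x) with respect to the chart family A: conditions (D1)-(D5).\<close>
definition c1_embedded ::
  "'p topology \<Rightarrow> ('p set \<times> ('p \<Rightarrow> 'x::banach)) set \<Rightarrow> 'p topology \<Rightarrow> ('x0::banach \<Rightarrow> 'x) \<Rightarrow> bool" where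
  "c1_embedded T A T0 j \<longleftrightarrow>
     top_banach_manifold T TYPE('x) \<and> top_banach_manifold T0 TYPE('x0) \<and>
     (\<forall>U \<phi>. (U, \<phi>) \<in> A \<longrightarrow> local_chart T U \<phi>) \<and>
     \<comment> \<open>(D1)\<close>
     dense_embedding j \<and>
     \<comment> \<open>(D2)\<close>
     topspace T0 \<subseteq> topspace T \<and> (\<forall>U. openin T U \<longrightarrow> openin T0 (U \<inter> topspace T0)) \<and>
     \<comment> \<open>(D3)\<close>
     topspace T \<subseteq> \<Union> (fst ` A) \<and>
     \<comment> \<open>(D4)\<close>
     (\<forall>\<eta>\<in>topspace T0. \<forall>U \<phi>. (U, \<phi>) \<in> A \<and> \<eta> \<in> U \<longrightarrow>
        (\<forall>p\<in>U \<inter> topspace T0. \<phi> p \<in> range j) \<and>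
        local_chart T0 (U \<inter> topspace T0) (chart0 j \<phi>)) \<and>
     \<comment> \<open>(D5) with k = 1\<close>
     (\<forall>\<eta>\<in>topspace T0. \<forall>U \<phi> V \<psi>. (U, \<phi>) \<in> A \<and> (V, \<psi>) \<in> A \<and> \<eta> \<in> U \<and> \<eta> \<in> V \<longrightarrow>
        frakC1 j (trans_dom T0 j U \<phi> V) (trans_map j U \<phi> \<psi>) \<and>
        frakC1 j (trans_dom T0 j V \<psi> U) (trans_map j V \<psi> \<phi>))"

definition restrict_charts0 ::
  "'p topology \<Rightarrow> ('x0 \<Rightarrow> 'x) \<Rightarrow> ('p set \<times> ('p \<Rightarrow> 'x)) set \<Rightarrow> ('p set \<times> ('p \<Rightarrow> 'x0)) set" where
  "restrict_charts0 T0 j A = (\<lambda>(U, \<phi>). (U \<inter> topspace T0, chart0 j \<phi>)) ` A"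

text \<open>Quasi-differentiable Banach manifold (M, A) with C^1-kernel M0, with explicit
  witnesses: an inner C^1-kernel M1 (topology T1, model 'x1 via j1) and a shell
  (topology Tt, charts At, model 'xt via e).\<close>
definition quasi_diff_manifold ::
  "'p topology \<Rightarrow> ('p set \<times> ('p \<Rightarrow> 'x::banach)) set \<Rightarrow> 'p topology \<Rightarrow> ('x0::banach \<Rightarrow> 'x) \<Rightarrow>
   'p topology \<Rightarrow> ('x1::banach \<Rightarrow> 'x0) \<Rightarrow>
   'p topology \<Rightarrow> ('p set \<times> ('p \<Rightarrow> 'xt::banach)) set \<Rightarrow> ('x \<Rightarrow> 'xt) \<Rightarrow> bool" where
  "quasi_diff_manifold T A T0 j T1 j1 Tt At e \<longleftrightarrow>
     c1_embedded T A T0 j \<and>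
     \<comment> \<open>inward spreadable\<close>
     c1_embedded T0 (restrict_charts0 T0 j A) T1 j1 \<and>
     \<comment> \<open>outward spreadable\<close>
     c1_embedded Tt At T e \<and>
     (\<forall>U \<phi>. (U, \<phi>) \<in> A \<longrightarrow>
        (\<exists>Ut \<phi>t. (Ut, \<phi>t) \<in> At \<and> U = Ut \<inter> topspace T \<and> (\<forall>p\<in>U. e (\<phi> p) = \<phi>t p))) \<and>
     (\<forall>Ut \<phi>t. (Ut, \<phi>t) \<in> At \<longrightarrow>
        (\<exists>U \<phi>. (U, \<phi>) \<in> A \<and> U = Ut \<inter> topspace T \<and> (\<forall>p\<in>U. e (\<phi> p) = \<phi>t p)))"

definition c1_near0 :: "'p set \<Rightarrow> ('p \<Rightarrow> 'y::real_normed_vector) \<Rightarrow> (real \<Rightarrow> 'p) \<Rightarrow> bool" where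
  "c1_near0 V \<psi> f \<longleftrightarrow> (\<exists>\<epsilon>>0. f ` {-\<epsilon><..<\<epsilon>} \<subseteq> V \<and>
      (\<exists>g'. (\<forall>t\<in>{-\<epsilon><..<\<epsilon>}. ((\<lambda>t. \<psi> (f t)) has_vector_derivative g' t) (at t)) \<and>
            continuous_on {-\<epsilon><..<\<epsilon>} g'))"

definition trans_deriv ::
  "'p topology \<Rightarrow> ('x0::real_normed_vector \<Rightarrow> 'x::real_normed_vector) \<Rightarrow> 'p set \<Rightarrow> ('p \<Rightarrow> 'x) \<Rightarrow>
   'p set \<Rightarrow> ('p \<Rightarrow> 'x) \<Rightarrow> 'p \<Rightarrow> ('x \<Rightarrow>\<^sub>L 'x)" where
  "trans_deriv T0 j U \<phi> V \<psi> \<eta> =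
     frakC1_deriv j (trans_dom T0 j U \<phi> V) (trans_map j U \<phi> \<psi>) (chart0 j \<phi> \<eta>)"

definition c1_curve ::
  "'p topology \<Rightarrow> ('x0::real_normed_vector \<Rightarrow> 'x::real_normed_vector) \<Rightarrow> ('p set \<times> ('p \<Rightarrow> 'x)) set \<Rightarrow>
   'p \<Rightarrow> (real \<Rightarrow> 'p) \<Rightarrow> bool" where
  "c1_curve T0 j A \<eta> f \<longleftrightarrow> f 0 = \<eta> \<and>
     (\<exists>U \<phi>. (U, \<phi>) \<in> A \<and> \<eta> \<in> U \<and> c1_near0 U \<phi> f \<and>
        (\<forall>V \<psi>. (V, \<psi>) \<in> A \<and> \<eta> \<in> V \<and> c1_near0 V \<psi> f \<longrightarrow>
           vector_derivative (\<lambda>t. \<psi> (f t)) (at 0) =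
           blinfun_apply (trans_deriv T0 j U \<phi> V \<psi> \<eta>) (vector_derivative (\<lambda>t. \<phi> (f t)) (at 0))))"

definition test_fns :: "'p topology \<Rightarrow> ('p set \<times> ('p \<Rightarrow> 'x::real_normed_vector)) set \<Rightarrow> 'p \<Rightarrow> ('p \<Rightarrow> real) set" where
  "test_fns T A \<eta> = {F. \<exists>W. openin T W \<and> \<eta> \<in> W \<and>
      (\<forall>U \<phi>. (U, \<phi>) \<in> A \<and> \<eta> \<in> U \<longrightarrow>
         (\<exists>D :: 'x \<Rightarrow> ('x \<Rightarrow>\<^sub>L real).
            (\<forall>x\<in>\<phi> ` (W \<inter> U). ((\<lambda>y. F (inv_into U \<phi> y)) has_derivative blinfun_apply (D x)) (at x)) \<and>
            continuous_on (\<phi> ` (W \<inter> U)) D))}"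

definition tangent_of :: "'p topology \<Rightarrow> ('p set \<times> ('p \<Rightarrow> 'x::real_normed_vector)) set \<Rightarrow> 'p \<Rightarrow>
    (real \<Rightarrow> 'p) \<Rightarrow> ('p \<Rightarrow> real) \<Rightarrow> real" where
  "tangent_of T A \<eta> f = (\<lambda>F\<in>test_fns T A \<eta>. deriv (\<lambda>t. F (f t)) 0)"

definition tangent_space ::
  "'p topology \<Rightarrow> 'p topology \<Rightarrow> ('x0::real_normed_vector \<Rightarrow> 'x::real_normed_vector) \<Rightarrow>
   ('p set \<times> ('p \<Rightarrow> 'x)) set \<Rightarrow> 'p \<Rightarrow> (('p \<Rightarrow> real) \<Rightarrow> real) set" where
  "tangent_space T T0 j A \<eta> = {tangent_of T A \<eta> f | f. c1_curve T0 j A \<eta> f}"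

definition tangent_space00 ::
  "'p topology \<Rightarrow> 'p topology \<Rightarrow> ('x0::real_normed_vector \<Rightarrow> 'x::real_normed_vector) \<Rightarrow>
   ('p set \<times> ('p \<Rightarrow> 'x)) set \<Rightarrow> 'p \<Rightarrow> (('p \<Rightarrow> real) \<Rightarrow> real) set" where
  "tangent_space00 T T0 j A \<eta> = {tangent_of T A \<eta> f | f. f 0 = \<eta> \<and>
      (\<forall>U \<phi>. (U, \<phi>) \<in> A \<and> \<eta> \<in> U \<longrightarrow> c1_near0 (U \<inter> topspace T0) (chart0 j \<phi>) f)}"

text \<open>phi'(eta) upsilon := (phi o psi^{-1})'(psi(eta)) (psi o f)'(0).\<close>
definition chart_deriv ::
  "'p topology \<Rightarrow> 'p topology \<Rightarrow> ('x0::real_normed_vector \<Rightarrow> 'x::real_normed_vector) \<Rightarrow>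
   ('p set \<times> ('p \<Rightarrow> 'x)) set \<Rightarrow> 'p \<Rightarrow> 'p set \<Rightarrow> ('p \<Rightarrow> 'x) \<Rightarrow> (('p \<Rightarrow> real) \<Rightarrow> real) \<Rightarrow> 'x" where
  "chart_deriv T T0 j A \<eta> U \<phi> \<upsilon> =
     (THE v. \<exists>f V \<psi>. c1_curve T0 j A \<eta> f \<and> tangent_of T A \<eta> f = \<upsilon> \<and>
        (V, \<psi>) \<in> A \<and> \<eta> \<in> V \<and> c1_near0 V \<psi> f \<and>
        v = blinfun_apply (trans_deriv T0 j V \<psi> U \<phi> \<eta>) (vector_derivative (\<lambda>t. \<psi> (f t)) (at 0)))"

end

theory Submission
  imports Defs
begin


definition hb_good :: "'a::real_normed_vector \<Rightarrow> ('a \<times> real) set \<Rightarrow> bool" where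
  "hb_good x0 G \<longleftrightarrow> (\<forall>x r y s. (x,r)\<in>G \<longrightarrow> (y,s)\<in>G \<longrightarrow> (x+y, r+s) \<in> G) \<and>
     (\<forall>x r a. (x,r)\<in>G \<longrightarrow> (a *\<^sub>R x, a*r) \<in> G) \<and>
     (\<forall>x r s. (x,r)\<in>G \<longrightarrow> (x,s)\<in>G \<longrightarrow> r = s) \<and>
     (\<forall>x r. (x,r)\<in>G \<longrightarrow> r \<le> norm x) \<and> (x0, norm x0) \<in> G"

lemma hb_add: "hb_good x0 G \<Longrightarrow> (x,r)\<in>G \<Longrightarrow> (y,s)\<in>G \<Longrightarrow> (x+y, r+s) \<in> G"
  unfolding hb_good_def by blast
lemma hb_sc: "hb_good x0 G \<Longrightarrow> (x,r)\<in>G \<Longrightarrow> (a *\<^sub>R x, a*r) \<in> G"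
  unfolding hb_good_def by blast
lemma hb_fn: "hb_good x0 G \<Longrightarrow> (x,r)\<in>G \<Longrightarrow> (x,s)\<in>G \<Longrightarrow> r = s"
  unfolding hb_good_def by blast
lemma hb_bd: "hb_good x0 G \<Longrightarrow> (x,r)\<in>G \<Longrightarrow> r \<le> norm x"
  unfolding hb_good_def by blast
lemma hb_x0: "hb_good x0 G \<Longrightarrow> (x0, norm x0) \<in> G"
  unfolding hb_good_def by blast

lemma hb_step:
  fixes z :: "'a::real_normed_vector"
  assumes g: "hb_good x0 G" and nz: "\<forall>r. (z,r) \<notin> G"
  shows "\<exists>G'. G \<subseteq> G' \<and> G' \<noteq> G \<and> hb_good x0 G'"
proof -
  have add: "\<And>x r y s. (x,r)\<in>G \<Longrightarrow> (y,s)\<in>G \<Longrightarrow> (x+y, r+s) \<in> G"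
   and sc: "\<And>x r a. (x,r)\<in>G \<Longrightarrow> (a *\<^sub>R x, a*r) \<in> G"
   and fn: "\<And>x r s. (x,r)\<in>G \<Longrightarrow> (x,s)\<in>G \<Longrightarrow> r = s"
   and bd: "\<And>x r. (x,r)\<in>G \<Longrightarrow> r \<le> norm x"
   and x0: "(x0, norm x0) \<in> G" using hb_add[OF g] hb_sc[OF g] hb_fn[OF g] hb_bd[OF g] hb_x0[OF g] by blast+
  have zero: "(0,0) \<in> G" using sc[OF x0, of 0] by simp
  have key: "r1 - norm (y1 - z) \<le> norm (y2 + z) - r2" if "(y1,r1)\<in>G" "(y2,r2)\<in>G" for y1 r1 y2 r2
  proof -
    have "r1 + r2 \<le> norm (y1 + y2)" using bd[OF add[OF that]] .
    also have "\<dots> = norm ((y1 - z) + (y2 + z))" by (simp add: algebra_simps)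
    also have "\<dots> \<le> norm (y1 - z) + norm (y2 + z)" by (rule norm_triangle_ineq)
    finally show ?thesis by simp
  qed
  define S where "S = {r - norm (y - z) | y r. (y,r) \<in> G}"
  define c where "c = Sup S"
  have Sne: "S \<noteq> {}" using zero unfolding S_def by blast
  have Sbdd: "bdd_above S" unfolding S_def bdd_above_def using key[OF _ zero] by fastforce
  have c_up: "r - norm (y - z) \<le> c" if "(y,r)\<in>G" for y r
    unfolding c_def by (rule cSup_upper[OF _ Sbdd]) (use that S_def in blast)
  have c_lo: "c \<le> norm (y + z) - r" if "(y,r)\<in>G" for y r
    unfolding c_def by (rule cSup_least[OF Sne]) (use that key S_def in blast)
  define G' where "G' = {(y + t *\<^sub>R z, r + t*c) | y r t. (y,r) \<in> G}"
  have memG': "(y + t *\<^sub>R z, r + t*c) \<in> G'" if "(y,r) \<in> G" for y r t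
    unfolding G'_def using that by blast
  have "G \<subseteq> G'"
  proof
    fix p assume "p \<in> G" then obtain y r where p: "p = (y,r)" "(y,r)\<in>G" by (cases p) auto
    show "p \<in> G'" using memG'[OF p(2), of 0] p by simp
  qed
  moreover have "(z, c) \<in> G'" using memG'[OF zero, of 1] by simp
  hence "G' \<noteq> G" using nz by blast
  moreover have "hb_good x0 G'"
    unfolding hb_good_def
  proof (intro conjI allI impI)
    fix x r y s assume "(x,r)\<in>G'" "(y,s)\<in>G'"
    then obtain x1 r1 t1 y1 s1 t2 where
      "x = x1 + t1 *\<^sub>R z" "r = r1 + t1*c" "(x1,r1)\<in>G" "y = y1 + t2 *\<^sub>R z" "s = s1 + t2*c" "(y1,s1)\<in>G"
      unfolding G'_def by blast
    then show "(x+y, r+s) \<in> G'"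
      using memG'[OF add[of x1 r1 y1 s1], of "t1+t2"] by (simp add: algebra_simps)
  next
    fix x r a assume "(x,r)\<in>G'"
    then obtain x1 r1 t1 where "x = x1 + t1 *\<^sub>R z" "r = r1 + t1*c" "(x1,r1)\<in>G"
      unfolding G'_def by blast
    then show "(a *\<^sub>R x, a*r) \<in> G'"
      using memG'[OF sc[of x1 r1 a], of "a*t1"] by (simp add: algebra_simps)
  next
    fix x r s assume "(x,r)\<in>G'" "(x,s)\<in>G'"
    then obtain x1 r1 t1 y1 s1 t2 where
      e: "x = x1 + t1 *\<^sub>R z" "r = r1 + t1*c" "(x1,r1)\<in>G" "x = y1 + t2 *\<^sub>R z" "s = s1 + t2*c" "(y1,s1)\<in>G"
      unfolding G'_def by blast
    have d: "(y1 - x1, s1 - r1) \<in> G" using add[OF e(6) sc[OF e(3), of "-1"]] by simp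
    show "r = s"
    proof (cases "t1 = t2")
      case True
      then have "x1 = y1" using e by simp
      then show ?thesis using fn[OF e(3)] e True by simp
    next
      case False
      have eq: "(t1 - t2) *\<^sub>R z = y1 - x1" using e(1,4) by (simp add: algebra_simps)
      have "z = (1/(t1-t2)) *\<^sub>R ((t1 - t2) *\<^sub>R z)" using False by simp
      hence "z = (1/(t1-t2)) *\<^sub>R (y1 - x1)" using eq by simp
      then have "(z, (1/(t1-t2)) * (s1 - r1)) \<in> G" using sc[OF d, of "1/(t1-t2)"] by simp
      then show ?thesis using nz by blast
    qed
  next
    fix x r assume "(x,r)\<in>G'"
    then obtain y r1 t where e: "x = y + t *\<^sub>R z" "r = r1 + t*c" "(y,r1)\<in>G"
      unfolding G'_def by blast
    show "r \<le> norm x"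
    proof (cases "t = 0")
      case True then show ?thesis using e bd by simp
    next
      case False
      show ?thesis
      proof (cases "t > 0")
        case True
        have "c \<le> norm ((1/t) *\<^sub>R y + z) - (1/t)*r1" using c_lo[OF sc[OF e(3), of "1/t"]] .
        hence "t*c \<le> t * (norm ((1/t) *\<^sub>R y + z) - (1/t)*r1)" using True by (simp add: mult_left_mono)
        also have "\<dots> = norm (t *\<^sub>R ((1/t) *\<^sub>R y + z)) - r1" using True by (simp add: right_diff_distrib)
        also have "t *\<^sub>R ((1/t) *\<^sub>R y + z) = y + t *\<^sub>R z" using True by (simp add: algebra_simps)
        finally show ?thesis using e by simp
      next
        case False2: False
        define s where "s = -t"
        have s: "s > 0" using False False2 s_def by simp
        have h1: "(1/s)*r1 - norm ((1/s) *\<^sub>R y - z) \<le> c" using c_up[OF sc[OF e(3), of "1/s"]] .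
        have h2: "s * ((1/s)*r1 - norm ((1/s) *\<^sub>R y - z)) \<le> s*c" using mult_left_mono[OF h1] s by simp
        have h3: "s * ((1/s)*r1 - norm ((1/s) *\<^sub>R y - z)) = r1 - norm (s *\<^sub>R ((1/s) *\<^sub>R y - z))"
          using s by (simp add: right_diff_distrib)
        have h4: "s *\<^sub>R ((1/s) *\<^sub>R y - z) = y - s *\<^sub>R z" using s by (simp add: algebra_simps)
        have h5: "y - s *\<^sub>R z = y + t *\<^sub>R z" unfolding s_def by simp
        have "r1 - norm (y + t *\<^sub>R z) \<le> s * c" using h2 h3 h4 h5 by simp
        then show ?thesis using e s_def by simp
      qed
    qed
  next
    show "(x0, norm x0) \<in> G'" using memG'[OF x0, of 0] by simp
  qed
  ultimately show ?thesis by blast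
qed

lemma hahn_banach_nonzero:
  fixes x0 :: "'a::real_normed_vector"
  assumes "x0 \<noteq> 0"
  shows "\<exists>l::'a \<Rightarrow> real. bounded_linear l \<and> l x0 \<noteq> 0"
proof -
  define \<A> where "\<A> = {G. hb_good x0 G}"
  define G0 where "G0 = {(c *\<^sub>R x0, c * norm x0) | c. True}"
  have "hb_good x0 G0" unfolding hb_good_def G0_def
  proof (intro conjI allI impI)
    fix x r y s assume "(x, r) \<in> {(c *\<^sub>R x0, c * norm x0) |c. True}" "(y, s) \<in> {(c *\<^sub>R x0, c * norm x0) |c. True}"
    then obtain a b where "x = a *\<^sub>R x0" "r = a * norm x0" "y = b *\<^sub>R x0" "s = b * norm x0" by blast
    then show "(x + y, r + s) \<in> {(c *\<^sub>R x0, c * norm x0) |c. True}"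
      by (intro CollectI exI[of _ "a+b"]) (simp add: algebra_simps)
  next
    fix x r a assume "(x, r) \<in> {(c *\<^sub>R x0, c * norm x0) |c. True}"
    then obtain b where "x = b *\<^sub>R x0" "r = b * norm x0" by blast
    then show "(a *\<^sub>R x, a * r) \<in> {(c *\<^sub>R x0, c * norm x0) |c. True}"
      by (intro CollectI exI[of _ "a*b"]) (simp add: algebra_simps)
  next
    fix x r s assume "(x, r) \<in> {(c *\<^sub>R x0, c * norm x0) |c. True}" "(x, s) \<in> {(c *\<^sub>R x0, c * norm x0) |c. True}"
    then obtain a b where "x = a *\<^sub>R x0" "r = a * norm x0" "x = b *\<^sub>R x0" "s = b * norm x0" by blast
    then have "a = b" using assms by (metis scaleR_cancel_right)
    then show "r = s" using \<open>r = _\<close> \<open>s = _\<close> by simp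
  next
    fix x r assume "(x, r) \<in> {(c *\<^sub>R x0, c * norm x0) |c. True}"
    then obtain a where "x = a *\<^sub>R x0" "r = a * norm x0" by blast
    then show "r \<le> norm x" by (simp add: mult_right_mono)
  next
    show "(x0, norm x0) \<in> {(c *\<^sub>R x0, c * norm x0) |c. True}" by (intro CollectI exI[of _ 1]) simp
  qed
  hence ne: "\<A> \<noteq> {}" unfolding \<A>_def by blast
  have "\<Union>\<C> \<in> \<A>" if C: "\<C> \<noteq> {}" "subset.chain \<A> \<C>" for \<C>
  proof -
    have CA: "\<C> \<subseteq> \<A>" and tot: "\<And>X Y. X\<in>\<C> \<Longrightarrow> Y\<in>\<C> \<Longrightarrow> X \<subseteq> Y \<or> Y \<subseteq> X"
      using C(2) unfolding subset.chain_def by blast+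
    have gd: "\<And>X. X \<in> \<C> \<Longrightarrow> hb_good x0 X" using CA \<A>_def by blast
    have both: "\<exists>Z\<in>\<C>. p \<in> Z \<and> q \<in> Z" if "p \<in> \<Union>\<C>" "q \<in> \<Union>\<C>" for p q
      using that tot by blast
    show ?thesis unfolding \<A>_def mem_Collect_eq hb_good_def
    proof (intro conjI allI impI)
      fix x r y s assume "(x,r) \<in> \<Union>\<C>" "(y,s) \<in> \<Union>\<C>"
      then obtain Z where "Z\<in>\<C>" "(x,r)\<in>Z" "(y,s)\<in>Z" using both by blast
      then show "(x+y, r+s) \<in> \<Union>\<C>" using hb_add[OF gd[of Z]] by blast
    next
      fix x r a assume "(x,r) \<in> \<Union>\<C>"
      then obtain Z where "Z\<in>\<C>" "(x,r)\<in>Z" by blast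
      then show "(a *\<^sub>R x, a*r) \<in> \<Union>\<C>" using hb_sc[OF gd[of Z]] by blast
    next
      fix x r s assume "(x,r) \<in> \<Union>\<C>" "(x,s) \<in> \<Union>\<C>"
      then obtain Z where "Z\<in>\<C>" "(x,r)\<in>Z" "(x,s)\<in>Z" using both by blast
      then show "r = s" using hb_fn[OF gd[of Z]] by blast
    next
      fix x r assume "(x,r) \<in> \<Union>\<C>"
      then obtain Z where "Z\<in>\<C>" "(x,r)\<in>Z" by blast
      then show "r \<le> norm x" using hb_bd[OF gd[of Z]] by blast
    next
      obtain Z where "Z \<in> \<C>" using C(1) by blast
      then show "(x0, norm x0) \<in> \<Union>\<C>" using hb_x0[OF gd[of Z]] by blast
    qed
  qed
  then obtain M where M: "M \<in> \<A>" "\<forall>X\<in>\<A>. M \<subseteq> X \<longrightarrow> X = M"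
    using subset_Zorn_nonempty[OF ne] by blast
  have gM: "hb_good x0 M" using M(1) \<A>_def by blast
  have tot: "\<exists>r. (z,r) \<in> M" for z
  proof (rule ccontr)
    assume "\<nexists>r. (z, r) \<in> M"
    then obtain G' where "M \<subseteq> G'" "G' \<noteq> M" "hb_good x0 G'" using hb_step[OF gM] by blast
    then show False using M(2) \<A>_def by blast
  qed
  define l where "l z = (THE r. (z,r) \<in> M)" for z
  have fn: "\<And>x r s. (x,r)\<in>M \<Longrightarrow> (x,s)\<in>M \<Longrightarrow> r = s" using hb_fn[OF gM] by blast
  have lM: "(z, l z) \<in> M" for z
  proof -
    obtain r where r: "(z,r)\<in>M" using tot by blast
    have "l z = r" unfolding l_def using fn r by (intro the_equality) blast+
    then show ?thesis using r by simp
  qed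
  have leq: "l z = r" if "(z,r)\<in>M" for z r using fn[OF lM that] .
  have ladd: "l (x+y) = l x + l y" for x y
    using hb_add[OF gM lM[of x] lM[of y]] leq by blast
  have lsc: "l (a *\<^sub>R x) = a * l x" for a x
    using hb_sc[OF gM lM[of x]] leq by blast
  have lbd: "l x \<le> norm x" for x using hb_bd[OF gM lM[of x]] .
  have labs: "\<bar>l x\<bar> \<le> norm x" for x
    using lbd[of x] lbd[of "-x"] lsc[of "-1" x] by simp
  have "bounded_linear l"
    by (rule bounded_linear_intro[where K=1]) (use ladd lsc labs in auto)
  moreover have "l x0 = norm x0" using leq hb_x0[OF gM] by blast
  ultimately show ?thesis using assms by auto
qed



lemma chart_open_image:
  assumes "local_chart S U c" "openin S W" "W \<subseteq> U"
  shows "open (c ` W)"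
proof -
  from assms(1) have U: "openin S U" "open (c`U)"
    and h: "homeomorphic_map (subtopology S U) (top_of_set (c`U)) c" by (auto simp: local_chart_def)
  have "openin (subtopology S U) W" unfolding openin_subtopology using assms(2,3) by blast
  then have "openin (top_of_set (c`U)) (c`W)" using homeomorphic_map_openness_eq[OF h] by blast
  then show ?thesis using openin_open_eq[OF U(2)] by blast
qed

lemma chart_inj:
  assumes "local_chart S U c" shows "inj_on c U"
proof -
  from assms have "openin S U" and h: "homeomorphic_map (subtopology S U) (top_of_set (c`U)) c"
    by (auto simp: local_chart_def)
  then have "topspace (subtopology S U) = U" by (simp add: openin_subset Int_absorb1)
  then show ?thesis using homeomorphic_imp_injective_map[OF h] by simp
qed

lemma frakC1_hasderiv:
  assumes "frakC1 j Om G" "open Om" "bounded_linear j"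
  obtains G' where "\<And>x. x\<in>Om \<Longrightarrow> (G has_derivative (\<lambda>h. blinfun_apply (G' x) (j h))) (at x)"
    "continuous_on Om G'"
proof -
  from assms(1) obtain G' where lim: "\<forall>x0\<in>Om. ((\<lambda>x. norm (G x - G x0 - blinfun_apply (G' x0) (j (x - x0))) / norm (x - x0))
                     \<longlongrightarrow> 0) (at x0 within Om)" and c: "continuous_on Om G'"
    unfolding frakC1_def by blast
  have "(G has_derivative (\<lambda>h. blinfun_apply (G' x) (j h))) (at x)" if "x \<in> Om" for x
  proof -
    have bl: "bounded_linear (\<lambda>h. blinfun_apply (G' x) (j h))"
      using bounded_linear_compose[OF blinfun.bounded_linear_right assms(3)] .
    have "(G has_derivative (\<lambda>h. blinfun_apply (G' x) (j h))) (at x within Om)"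
      unfolding has_derivative_iff_norm using bl lim that by blast
    then show ?thesis using at_within_open[OF that assms(2)] by simp
  qed
  then show ?thesis using that c by blast
qed

lemma dense_eq:
  fixes f g :: "'x::real_normed_vector \<Rightarrow> 'y::real_normed_vector"
  assumes "dense_embedding j" "continuous_on UNIV f" "continuous_on UNIV g" "\<And>h. f (j h) = g (j h)"
  shows "f x = g x"
proof -
  have "closed {x. f x = g x}" using closed_Collect_eq[OF assms(2,3)] .
  moreover have "range j \<subseteq> {x. f x = g x}" using assms(4) by auto
  ultimately have "closure (range j) \<subseteq> {x. f x = g x}" by (rule closure_minimal[rotated])
  then show ?thesis using assms(1) unfolding dense_embedding_def by auto
qed

lemma dense_eq_lin:
  fixes f g :: "'x::real_normed_vector \<Rightarrow> 'y::real_normed_vector"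
  assumes "dense_embedding j" "bounded_linear f" "bounded_linear g" "\<And>h. f (j h) = g (j h)"
  shows "f x = g x"
  using dense_eq[OF assms(1) linear_continuous_on[OF assms(2)] linear_continuous_on[OF assms(3)] assms(4)] .

lemma frakC1_deriv_has:
  assumes dj: "dense_embedding j" and fc: "frakC1 j Om G" and Om: "open Om" "x \<in> Om"
  shows "(G has_derivative (\<lambda>h. blinfun_apply (frakC1_deriv j Om G x) (j h))) (at x)"
proof -
  have bj: "bounded_linear j" using dj unfolding dense_embedding_def by blast
  obtain G' where G': "\<And>x. x\<in>Om \<Longrightarrow> (G has_derivative (\<lambda>h. blinfun_apply (G' x) (j h))) (at x)"
    using frakC1_hasderiv[OF fc Om(1) bj] by blast
  have "frakC1_deriv j Om G x = G' x"
    unfolding frakC1_deriv_def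
  proof (rule the_equality)
    have "(G has_derivative (\<lambda>h. blinfun_apply (G' x) (j h))) (at x within Om)"
      using G'[OF Om(2)] by (rule has_derivative_at_withinI)
    then show "((\<lambda>y. norm (G y - G x - blinfun_apply (G' x) (j (y - x))) / norm (y - x)) \<longlongrightarrow> 0) (at x within Om)"
      unfolding has_derivative_iff_norm by (rule conjunct2)
  next
    fix D assume lim: "((\<lambda>y. norm (G y - G x - blinfun_apply D (j (y - x))) / norm (y - x)) \<longlongrightarrow> 0) (at x within Om)"
    have bl: "bounded_linear (\<lambda>h. blinfun_apply D (j h))"
      using bounded_linear_compose[OF blinfun.bounded_linear_right bj] .
    have "(G has_derivative (\<lambda>h. blinfun_apply D (j h))) (at x within Om)"
      unfolding has_derivative_iff_norm using bl lim by blast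
    then have "(G has_derivative (\<lambda>h. blinfun_apply D (j h))) (at x)"
      using at_within_open[OF Om(2) Om(1)] by simp
    then have eqf: "(\<lambda>h. blinfun_apply D (j h)) = (\<lambda>h. blinfun_apply (G' x) (j h))"
      by (rule has_derivative_unique[OF _ G'[OF Om(2)]])
    have "blinfun_apply D y = blinfun_apply (G' x) y" for y
      by (rule dense_eq_lin[OF dj blinfun.bounded_linear_right blinfun.bounded_linear_right]) (rule fun_cong[OF eqf])
    then show "D = G' x" by (intro blinfun_eqI) auto
  qed
  then show ?thesis using G'[OF Om(2)] by simp
qed



lemma c1e_1: "c1_embedded T A T0 j \<Longrightarrow> \<forall>U \<phi>. (U, \<phi>) \<in> A \<longrightarrow> local_chart T U \<phi>"
  unfolding c1_embedded_def by (elim conjE) assumption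
lemma c1e_2: "c1_embedded T A T0 j \<Longrightarrow> dense_embedding j"
  unfolding c1_embedded_def by (elim conjE) assumption
lemma c1e_3: "c1_embedded T A T0 j \<Longrightarrow> topspace T0 \<subseteq> topspace T"
  unfolding c1_embedded_def by (elim conjE) assumption
lemma c1e_4: "c1_embedded T A T0 j \<Longrightarrow> (\<forall>U. openin T U \<longrightarrow> openin T0 (U \<inter> topspace T0))"
  unfolding c1_embedded_def by (elim conjE) assumption
lemma c1e_5: "c1_embedded T A T0 j \<Longrightarrow> (\<forall>\<eta>\<in>topspace T0. \<forall>U \<phi>. (U, \<phi>) \<in> A \<and> \<eta> \<in> U \<longrightarrow>
        (\<forall>p\<in>U \<inter> topspace T0. \<phi> p \<in> range j) \<and>
        local_chart T0 (U \<inter> topspace T0) (chart0 j \<phi>))"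
  unfolding c1_embedded_def by (elim conjE) assumption
lemma c1e_6: "c1_embedded T A T0 j \<Longrightarrow> (\<forall>\<eta>\<in>topspace T0. \<forall>U \<phi> V \<psi>. (U, \<phi>) \<in> A \<and> (V, \<psi>) \<in> A \<and> \<eta> \<in> U \<and> \<eta> \<in> V \<longrightarrow>
        frakC1 j (trans_dom T0 j U \<phi> V) (trans_map j U \<phi> \<psi>) \<and>
        frakC1 j (trans_dom T0 j V \<psi> U) (trans_map j V \<psi> \<phi>))"
  unfolding c1_embedded_def by (elim conjE) assumption

locale qdm =
  fixes T T0 T1 Tt :: "'p topology"
    and A :: "('p set \<times> ('p \<Rightarrow> 'x::banach)) set"
    and j :: "'x0::banach \<Rightarrow> 'x"
    and j1 :: "'x1::banach \<Rightarrow> 'x0"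
    and At :: "('p set \<times> ('p \<Rightarrow> 'xt::banach)) set"
    and e :: "'x \<Rightarrow> 'xt"
    and \<eta> :: 'p
  assumes Q: "quasi_diff_manifold T A T0 j T1 j1 Tt At e" and eta: "\<eta> \<in> topspace T0"
begin

lemma cA: "c1_embedded T A T0 j" using Q unfolding quasi_diff_manifold_def by (elim conjE) assumption
lemma cS: "c1_embedded Tt At T e" using Q unfolding quasi_diff_manifold_def by (elim conjE) assumption

lemma shell_of: "(U,\<phi>)\<in>A \<Longrightarrow> \<exists>Ut \<phi>t. (Ut,\<phi>t)\<in>At \<and> U = Ut \<inter> topspace T \<and> (\<forall>p\<in>U. e (\<phi> p) = \<phi>t p)"
proof -
  assume "(U,\<phi>)\<in>A"
  moreover have "\<forall>U \<phi>. (U, \<phi>) \<in> A \<longrightarrow>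
        (\<exists>Ut \<phi>t. (Ut, \<phi>t) \<in> At \<and> U = Ut \<inter> topspace T \<and> (\<forall>p\<in>U. e (\<phi> p) = \<phi>t p))"
    using Q unfolding quasi_diff_manifold_def by (elim conjE) assumption
  ultimately show ?thesis by blast
qed

lemma dj: "dense_embedding j" using c1e_2[OF cA] .
lemma de: "dense_embedding e" using c1e_2[OF cS] .
lemma bj: "bounded_linear j" using dj unfolding dense_embedding_def by blast
lemma be: "bounded_linear e" using de unfolding dense_embedding_def by blast
lemma ie: "inj e" using de unfolding dense_embedding_def by blast

lemma etaT: "\<eta> \<in> topspace T" using c1e_3[OF cA] eta by blast
lemma D2: "openin T U \<Longrightarrow> openin T0 (U \<inter> topspace T0)" using c1e_4[OF cA] by blast
lemma chartA: "(U,\<phi>)\<in>A \<Longrightarrow> local_chart T U \<phi>" using c1e_1[OF cA] by blast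
lemma chartAt: "(U,\<phi>)\<in>At \<Longrightarrow> local_chart Tt U \<phi>" using c1e_1[OF cS] by blast
lemma openA: "(U,\<phi>)\<in>A \<Longrightarrow> openin T U" using chartA unfolding local_chart_def by blast
lemma injA: "(U,\<phi>)\<in>A \<Longrightarrow> inj_on \<phi> U" using chart_inj[OF chartA] .
lemma injAt: "(U,\<phi>)\<in>At \<Longrightarrow> inj_on \<phi> U" using chart_inj[OF chartAt] .

lemma D4r: "(U,\<phi>)\<in>A \<Longrightarrow> \<eta>\<in>U \<Longrightarrow> p \<in> U \<inter> topspace T0 \<Longrightarrow> \<phi> p \<in> range j"
  using c1e_5[OF cA] eta by blast
lemma D4c: "(U,\<phi>)\<in>A \<Longrightarrow> \<eta>\<in>U \<Longrightarrow> local_chart T0 (U \<inter> topspace T0) (chart0 j \<phi>)"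
  using c1e_5[OF cA] eta by blast
lemma D5: "(U,\<phi>)\<in>A \<Longrightarrow> (V,\<psi>)\<in>A \<Longrightarrow> \<eta>\<in>U \<Longrightarrow> \<eta>\<in>V \<Longrightarrow>
    frakC1 j (trans_dom T0 j U \<phi> V) (trans_map j U \<phi> \<psi>)"
  using c1e_6[OF cA] eta by blast
lemma D5t: "(U,\<phi>)\<in>At \<Longrightarrow> (V,\<psi>)\<in>At \<Longrightarrow> \<eta>\<in>U \<Longrightarrow> \<eta>\<in>V \<Longrightarrow>
    frakC1 e (trans_dom T e U \<phi> V) (trans_map e U \<phi> \<psi>)"
  using c1e_6[OF cS] etaT by blast

lemma j_chart0: "(U,\<phi>)\<in>A \<Longrightarrow> \<eta>\<in>U \<Longrightarrow> p \<in> U \<inter> topspace T0 \<Longrightarrow> j (chart0 j \<phi> p) = \<phi> p"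
  unfolding chart0_def using D4r by (simp add: f_inv_into_f)

lemma tm_val: "(U,\<phi>)\<in>A \<Longrightarrow> \<eta>\<in>U \<Longrightarrow> p \<in> U \<inter> topspace T0 \<Longrightarrow> trans_map j U \<phi> \<psi> (chart0 j \<phi> p) = \<psi> p"
  unfolding trans_map_def using j_chart0 inv_into_f_f[OF injA] by simp

lemma td_open: "(U,\<phi>)\<in>A \<Longrightarrow> \<eta>\<in>U \<Longrightarrow> openin T W \<Longrightarrow> open (chart0 j \<phi> ` (U \<inter> W \<inter> topspace T0))"
proof -
  assume U: "(U,\<phi>)\<in>A" "\<eta>\<in>U" and W: "openin T W"
  have "openin T0 ((U \<inter> W) \<inter> topspace T0)" by (rule D2) (use openA[OF U(1)] W in blast)
  then show ?thesis by (intro chart_open_image[OF D4c[OF U]]) (auto simp: Int_assoc)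
qed

lemma td_open': "(U,\<phi>)\<in>A \<Longrightarrow> \<eta>\<in>U \<Longrightarrow> (V,\<psi>)\<in>A \<Longrightarrow> open (trans_dom T0 j U \<phi> V)"
  unfolding trans_dom_def using td_open openA by blast

lemma z0_in: "\<eta>\<in>U \<Longrightarrow> \<eta>\<in>V \<Longrightarrow> chart0 j \<phi> \<eta> \<in> trans_dom T0 j U \<phi> V"
  unfolding trans_dom_def using eta by blast

lemma TD_has: "(U,\<phi>)\<in>A \<Longrightarrow> \<eta>\<in>U \<Longrightarrow> (V,\<psi>)\<in>A \<Longrightarrow> \<eta>\<in>V \<Longrightarrow>
   (trans_map j U \<phi> \<psi> has_derivative (\<lambda>h. blinfun_apply (trans_deriv T0 j U \<phi> V \<psi> \<eta>) (j h))) (at (chart0 j \<phi> \<eta>))"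
  unfolding trans_deriv_def
  by (rule frakC1_deriv_has[OF dj D5 td_open' z0_in]) assumption+

lemma TD_id:
  assumes U: "(U,\<phi>)\<in>A" "\<eta>\<in>U"
  shows "blinfun_apply (trans_deriv T0 j U \<phi> U \<phi> \<eta>) h = h"
proof -
  have agree: "j z = trans_map j U \<phi> \<phi> z" if "z \<in> trans_dom T0 j U \<phi> U" for z
  proof -
    from that obtain p where p: "p \<in> U \<inter> U \<inter> topspace T0" "z = chart0 j \<phi> p" unfolding trans_dom_def by blast
    then show ?thesis using tm_val[OF U, of p \<phi>] j_chart0[OF U, of p] by simp
  qed
  have d: "(trans_map j U \<phi> \<phi> has_derivative j) (at (chart0 j \<phi> \<eta>))"
    by (rule has_derivative_transform_within_open[OF bounded_linear_imp_has_derivative[OF bj]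
        td_open'[OF U U(1)] z0_in[OF U(2) U(2)] agree])
  have eq: "(\<lambda>h. blinfun_apply (trans_deriv T0 j U \<phi> U \<phi> \<eta>) (j h)) = j"
    by (rule has_derivative_unique[OF TD_has[OF U U] d])
  show ?thesis
    by (rule dense_eq_lin[where j=j and f="blinfun_apply (trans_deriv T0 j U \<phi> U \<phi> \<eta>)" and g="\<lambda>x. x",
          OF dj blinfun.bounded_linear_right bounded_linear_ident]) (rule fun_cong[OF eq])
qed

lemma sh_val:
  assumes U: "(U,\<phi>)\<in>A" and sh: "(Ut,\<phi>t)\<in>At" "U = Ut \<inter> topspace T" "\<forall>p\<in>U. e (\<phi> p) = \<phi>t p"
    and p: "p \<in> U"
  shows "trans_map e Ut \<phi>t cc (\<phi> p) = cc p"
proof -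
  have "inv_into Ut \<phi>t (\<phi>t p) = p" using inv_into_f_f[OF injAt[OF sh(1)]] p sh(2) by blast
  then show ?thesis unfolding trans_map_def using sh(3) p by simp
qed

lemma sh_dom:
  assumes U: "(U,\<phi>)\<in>A" and sh: "(Ut,\<phi>t)\<in>At" "U = Ut \<inter> topspace T" "\<forall>p\<in>U. e (\<phi> p) = \<phi>t p"
    and V: "(V,\<psi>)\<in>A" and shV: "(Vt,\<psi>t)\<in>At" "V = Vt \<inter> topspace T"
  shows "trans_dom T e Ut \<phi>t Vt = \<phi> ` (U \<inter> V)"
proof -
  have s: "Ut \<inter> Vt \<inter> topspace T = U \<inter> V" using sh(2) shV(2) by blast
  have "chart0 e \<phi>t p = \<phi> p" if "p \<in> U \<inter> V" for p
    unfolding chart0_def using sh(3) that inv_f_f[OF ie] by (metis IntD1)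
  then show ?thesis unfolding trans_dom_def s by (rule image_cong[OF refl])
qed

lemma sh_open: "(U,\<phi>)\<in>A \<Longrightarrow> (V,\<psi>)\<in>A \<Longrightarrow> open (\<phi> ` (U \<inter> V))"
  by (rule chart_open_image[OF chartA]) (auto intro: openin_Int openA)

lemma KI:
  assumes U: "(U,\<phi>)\<in>A" "\<eta>\<in>U" and V: "(V,\<psi>)\<in>A" "\<eta>\<in>V"
    and sh: "(Ut,\<phi>t)\<in>At" "U = Ut \<inter> topspace T" "\<forall>p\<in>U. e (\<phi> p) = \<phi>t p"
    and shV: "(Vt,\<psi>t)\<in>At" "V = Vt \<inter> topspace T" "\<forall>p\<in>V. e (\<psi> p) = \<psi>t p"
    and H': "\<And>x. x \<in> \<phi> ` (U \<inter> V) \<Longrightarrow> (trans_map e Ut \<phi>t \<psi>t has_derivative (\<lambda>h. blinfun_apply (H' x) (e h))) (at x)"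
  shows "e (blinfun_apply (trans_deriv T0 j U \<phi> V \<psi> \<eta>) h) = blinfun_apply (H' (\<phi> \<eta>)) (e h)"
proof -
  let ?H = "trans_map e Ut \<phi>t \<psi>t"
  let ?TD = "blinfun_apply (trans_deriv T0 j U \<phi> V \<psi> \<eta>)"
  let ?z0 = "chart0 j \<phi> \<eta>"
  have eta0: "\<eta> \<in> U \<inter> topspace T0" using U eta by blast
  have jz0: "j ?z0 = \<phi> \<eta>" using j_chart0[OF U eta0] .
  have d1: "((\<lambda>z. e (trans_map j U \<phi> \<psi> z)) has_derivative (\<lambda>h. e (?TD (j h)))) (at ?z0)"
    using has_derivative_compose[OF TD_has[OF U V] bounded_linear_imp_has_derivative[OF be]] .
  have dH: "(?H has_derivative (\<lambda>h. blinfun_apply (H' (\<phi> \<eta>)) (e h))) (at (j ?z0))"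
    using H'[of "\<phi> \<eta>"] U V jz0 by simp
  have d2: "((\<lambda>z. ?H (j z)) has_derivative (\<lambda>h. blinfun_apply (H' (\<phi> \<eta>)) (e (j h)))) (at ?z0)"
    using has_derivative_compose[OF bounded_linear_imp_has_derivative[OF bj] dH] .
  have agree: "?H (j z) = e (trans_map j U \<phi> \<psi> z)" if "z \<in> trans_dom T0 j U \<phi> V" for z
  proof -
    from that obtain p where p: "p \<in> U \<inter> V \<inter> topspace T0" "z = chart0 j \<phi> p" unfolding trans_dom_def by blast
    have "j z = \<phi> p" using j_chart0[OF U] p by blast
    moreover have "trans_map j U \<phi> \<psi> z = \<psi> p" using tm_val[OF U] p by blast
    moreover have "?H (\<phi> p) = \<psi>t p" using sh_val[OF U(1) sh] p by blast
    ultimately show ?thesis using shV(3) p by simp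
  qed
  have d2': "((\<lambda>z. e (trans_map j U \<phi> \<psi> z)) has_derivative (\<lambda>h. blinfun_apply (H' (\<phi> \<eta>)) (e (j h)))) (at ?z0)"
    by (rule has_derivative_transform_within_open[OF d2 td_open'[OF U V(1)] z0_in[OF U(2) V(2)] agree])
  have eq: "(\<lambda>h. e (?TD (j h))) = (\<lambda>h. blinfun_apply (H' (\<phi> \<eta>)) (e (j h)))"
    by (rule has_derivative_unique[OF d1 d2'])
  have bl1: "bounded_linear (\<lambda>x. e (?TD x))" by (rule bounded_linear_compose[OF be blinfun.bounded_linear_right])
  have bl2: "bounded_linear (\<lambda>x. blinfun_apply (H' (\<phi> \<eta>)) (e x))" by (rule bounded_linear_compose[OF blinfun.bounded_linear_right be])
  show ?thesis
    by (rule dense_eq_lin[where j=j and f="\<lambda>x. e (?TD x)" and g="\<lambda>x. blinfun_apply (H' (\<phi> \<eta>)) (e x)",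
          OF dj bl1 bl2]) (rule fun_cong[OF eq])
qed

end


context qdm begin

lemma ML1:
  assumes V: "(V,\<psi>)\<in>A" and f0: "f 0 = \<eta>" and c: "c1_near0 V \<psi> f"
    and dV: "((\<lambda>y. F (inv_into V \<psi> y)) has_derivative L) (at (\<psi> \<eta>))"
  shows "((\<lambda>t. F (f t)) has_real_derivative L (vector_derivative (\<lambda>t. \<psi> (f t)) (at 0))) (at 0)"
proof -
  obtain \<epsilon> g' where \<epsilon>: "\<epsilon>>0" "f ` {-\<epsilon><..<\<epsilon>} \<subseteq> V"
    "\<forall>t\<in>{-\<epsilon><..<\<epsilon>}. ((\<lambda>t. \<psi> (f t)) has_vector_derivative g' t) (at t)"
    using c unfolding c1_near0_def by blast
  have d0: "((\<lambda>t. \<psi> (f t)) has_vector_derivative g' 0) (at 0)" using \<epsilon> by auto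
  hence w: "vector_derivative (\<lambda>t. \<psi> (f t)) (at 0) = g' 0" by (rule vector_derivative_at)
  have bl: "bounded_linear L" using dV by (rule has_derivative_bounded_linear)
  have dV': "((\<lambda>y. F (inv_into V \<psi> y)) has_derivative L) (at (\<psi> (f 0)))" using dV f0 by simp
  have d1: "((\<lambda>t. F (inv_into V \<psi> (\<psi> (f t)))) has_derivative (\<lambda>s. L (s *\<^sub>R g' 0))) (at 0)"
    using has_derivative_compose[OF d0[unfolded has_vector_derivative_def] dV'] .
  have eq: "F (inv_into V \<psi> (\<psi> (f t))) = F (f t)" if "t \<in> {-\<epsilon><..<\<epsilon>}" for t
  proof -
    have "f t \<in> V" using \<epsilon>(2) that by blast
    then show ?thesis using inv_into_f_f[OF injA[OF V]] by simp
  qed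
  have d2: "((\<lambda>t. F (f t)) has_derivative (\<lambda>s. L (s *\<^sub>R g' 0))) (at 0)"
    by (rule has_derivative_transform_within_open[OF d1 open_greaterThanLessThan _ eq]) (use \<epsilon> in auto)
  have "(\<lambda>s. L (s *\<^sub>R g' 0)) = (*) (L (g' 0))"
    using linear_scale[OF bounded_linear.linear[OF bl]] by (auto simp: fun_eq_iff)
  then show ?thesis unfolding has_field_derivative_def w using d2 by simp
qed

lemma ML2:
  assumes U: "(U,\<phi>)\<in>A" "\<eta>\<in>U" and V: "(V,\<psi>)\<in>A" "\<eta>\<in>V"
    and dU: "((\<lambda>y. F (inv_into U \<phi> y)) has_derivative LU) (at (\<phi> \<eta>))"
    and dV: "((\<lambda>y. F (inv_into V \<psi> y)) has_derivative LV) (at (\<psi> \<eta>))"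
  shows "LV h = LU (blinfun_apply (trans_deriv T0 j V \<psi> U \<phi> \<eta>) h)"
proof -
  let ?z0 = "chart0 j \<psi> \<eta>"
  let ?TD = "blinfun_apply (trans_deriv T0 j V \<psi> U \<phi> \<eta>)"
  have eta0: "\<eta> \<in> V \<inter> topspace T0" using V eta by blast
  have jz0: "j ?z0 = \<psi> \<eta>" using j_chart0[OF V eta0] .
  have G0z0: "trans_map j V \<psi> \<phi> ?z0 = \<phi> \<eta>" using tm_val[OF V eta0] .
  have dV': "((\<lambda>y. F (inv_into V \<psi> y)) has_derivative LV) (at (j ?z0))" using dV jz0 by simp
  have d1: "((\<lambda>z. F (inv_into V \<psi> (j z))) has_derivative (\<lambda>h. LV (j h))) (at ?z0)"
    using has_derivative_compose[OF bounded_linear_imp_has_derivative[OF bj] dV'] .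
  have dU': "((\<lambda>y. F (inv_into U \<phi> y)) has_derivative LU) (at (trans_map j V \<psi> \<phi> ?z0))" using dU G0z0 by simp
  have d2: "((\<lambda>z. F (inv_into U \<phi> (trans_map j V \<psi> \<phi> z))) has_derivative (\<lambda>h. LU (?TD (j h)))) (at ?z0)"
    using has_derivative_compose[OF TD_has[OF V U] dU'] .
  have agree: "F (inv_into U \<phi> (trans_map j V \<psi> \<phi> z)) = F (inv_into V \<psi> (j z))"
    if "z \<in> trans_dom T0 j V \<psi> U" for z
  proof -
    from that obtain p where p: "p \<in> V \<inter> U \<inter> topspace T0" "z = chart0 j \<psi> p" unfolding trans_dom_def by blast
    have 1: "trans_map j V \<psi> \<phi> z = \<phi> p" using tm_val[OF V, of p \<phi>] p by blast
    have 2: "j z = \<psi> p" using j_chart0[OF V, of p] p by blast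
    have 3: "inv_into U \<phi> (\<phi> p) = p" using inv_into_f_f[OF injA[OF U(1)]] p by blast
    have 4: "inv_into V \<psi> (\<psi> p) = p" using inv_into_f_f[OF injA[OF V(1)]] p by blast
    show ?thesis using 1 2 3 4 by simp
  qed
  have d2': "((\<lambda>z. F (inv_into V \<psi> (j z))) has_derivative (\<lambda>h. LU (?TD (j h)))) (at ?z0)"
    by (rule has_derivative_transform_within_open[OF d2 td_open'[OF V U(1)] z0_in[OF V(2) U(2)] agree])
  have eq: "(\<lambda>h. LV (j h)) = (\<lambda>h. LU (?TD (j h)))" by (rule has_derivative_unique[OF d1 d2'])
  have bl1: "bounded_linear LV" using dV by (rule has_derivative_bounded_linear)
  have bl2: "bounded_linear (\<lambda>x. LU (?TD x))"
    by (rule bounded_linear_compose[OF has_derivative_bounded_linear[OF dU] blinfun.bounded_linear_right])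
  show ?thesis
    by (rule dense_eq_lin[where j=j and f=LV and g="\<lambda>x. LU (?TD x)", OF dj bl1 bl2]) (rule fun_cong[OF eq])
qed

lemma TF_deriv:
  assumes F: "F \<in> test_fns T A \<eta>" and U: "(U,\<phi>)\<in>A" "\<eta>\<in>U"
  shows "\<exists>L. ((\<lambda>y. F (inv_into U \<phi> y)) has_derivative L) (at (\<phi> \<eta>))"
proof -
  obtain W where W: "openin T W" "\<eta> \<in> W" and D: "\<forall>U \<phi>. (U, \<phi>) \<in> A \<and> \<eta> \<in> U \<longrightarrow>
         (\<exists>D :: 'x \<Rightarrow> ('x \<Rightarrow>\<^sub>L real).
            (\<forall>x\<in>\<phi> ` (W \<inter> U). ((\<lambda>y. F (inv_into U \<phi> y)) has_derivative blinfun_apply (D x)) (at x)) \<and>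
            continuous_on (\<phi> ` (W \<inter> U)) D)"
    using F unfolding test_fns_def by blast
  obtain D :: "'x \<Rightarrow> ('x \<Rightarrow>\<^sub>L real)" where "\<forall>x\<in>\<phi> ` (W \<inter> U). ((\<lambda>y. F (inv_into U \<phi> y)) has_derivative blinfun_apply (D x)) (at x)"
    using D U by blast
  moreover have "\<phi> \<eta> \<in> \<phi> ` (W \<inter> U)" using W U by blast
  ultimately show ?thesis by blast
qed

lemma TANG:
  assumes U: "(U,\<phi>)\<in>A" "\<eta>\<in>U" and V: "(V,\<psi>)\<in>A" "\<eta>\<in>V" and f0: "f 0 = \<eta>" and c: "c1_near0 V \<psi> f"
    and F: "F \<in> test_fns T A \<eta>" and dU: "((\<lambda>y. F (inv_into U \<phi> y)) has_derivative LU) (at (\<phi> \<eta>))"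
  shows "tangent_of T A \<eta> f F = LU (blinfun_apply (trans_deriv T0 j V \<psi> U \<phi> \<eta>) (vector_derivative (\<lambda>t. \<psi> (f t)) (at 0)))"
proof -
  obtain LV where dV: "((\<lambda>y. F (inv_into V \<psi> y)) has_derivative LV) (at (\<psi> \<eta>))" using TF_deriv[OF F V] by blast
  have "tangent_of T A \<eta> f F = deriv (\<lambda>t. F (f t)) 0" using F unfolding tangent_of_def by simp
  also have "\<dots> = LV (vector_derivative (\<lambda>t. \<psi> (f t)) (at 0))" by (rule DERIV_imp_deriv[OF ML1[OF V(1) f0 c dV]])
  also have "\<dots> = LU (blinfun_apply (trans_deriv T0 j V \<psi> U \<phi> \<eta>) (vector_derivative (\<lambda>t. \<psi> (f t)) (at 0)))"
    by (rule ML2[OF U V dU dV])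
  finally show ?thesis .
qed

end


context qdm begin

lemma TFmem:
  assumes U: "(U,\<phi>)\<in>A" "\<eta>\<in>U"
    and sh: "(Ut,\<phi>t)\<in>At" "U = Ut \<inter> topspace T" "\<forall>p\<in>U. e (\<phi> p) = \<phi>t p"
    and l: "bounded_linear l"
  shows "(\<lambda>p. l (\<phi>t p)) \<in> test_fns T A \<eta>"
  unfolding test_fns_def mem_Collect_eq
proof (intro exI[of _ U] conjI allI impI)
  show "openin T U" using openA[OF U(1)] .
  show "\<eta> \<in> U" by fact
  fix U' \<phi>' assume "(U', \<phi>') \<in> A \<and> \<eta> \<in> U'"
  then have U': "(U', \<phi>') \<in> A" "\<eta> \<in> U'" by auto
  obtain U't \<phi>'t where sh': "(U't,\<phi>'t)\<in>At" "U' = U't \<inter> topspace T" "\<forall>p\<in>U'. e (\<phi>' p) = \<phi>'t p"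
    using shell_of[OF U'(1)] by blast
  let ?H = "trans_map e U't \<phi>'t \<phi>t"
  have fc: "frakC1 e (\<phi>' ` (U' \<inter> U)) ?H"
    using D5t[OF sh'(1) sh(1)] U'(2) U(2) sh'(2) sh(2) sh_dom[OF U'(1) sh' U(1) sh(1,2)] by auto
  have op: "open (\<phi>' ` (U' \<inter> U))" by (rule sh_open[OF U'(1) U(1)])
  obtain H' where H': "\<And>x. x\<in>\<phi>' ` (U' \<inter> U) \<Longrightarrow> (?H has_derivative (\<lambda>h. blinfun_apply (H' x) (e h))) (at x)"
    and Hc: "continuous_on (\<phi>' ` (U' \<inter> U)) H'"
    using frakC1_hasderiv[OF fc op be] by blast
  define D where "D x = (Blinfun l o\<^sub>L H' x) o\<^sub>L Blinfun e" for x
  have Dap: "blinfun_apply (D x) = (\<lambda>h. l (blinfun_apply (H' x) (e h)))" for x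
    unfolding D_def using bounded_linear_Blinfun_apply[OF l] bounded_linear_Blinfun_apply[OF be]
    by (simp add: fun_eq_iff)
  have set: "\<phi>' ` (U \<inter> U') = \<phi>' ` (U' \<inter> U)" by (simp add: Int_commute)
  show "\<exists>D :: 'x \<Rightarrow> ('x \<Rightarrow>\<^sub>L real).
          (\<forall>x\<in>\<phi>' ` (U \<inter> U'). ((\<lambda>y. l (\<phi>t (inv_into U' \<phi>' y))) has_derivative blinfun_apply (D x)) (at x)) \<and>
          continuous_on (\<phi>' ` (U \<inter> U')) D"
  proof (intro exI[of _ D] conjI ballI)
    fix x assume x: "x \<in> \<phi>' ` (U \<inter> U')"
    then have x': "x \<in> \<phi>' ` (U' \<inter> U)" using set by simp
    have d: "((\<lambda>y. l (?H y)) has_derivative (\<lambda>h. l (blinfun_apply (H' x) (e h)))) (at x)"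
      using has_derivative_compose[OF H'[OF x'] bounded_linear_imp_has_derivative[OF l]] .
    have ag: "l (?H y) = l (\<phi>t (inv_into U' \<phi>' y))" if "y \<in> \<phi>' ` (U' \<inter> U)" for y
    proof -
      from that obtain p where p: "p \<in> U' \<inter> U" "y = \<phi>' p" by blast
      have "?H y = \<phi>t p" using sh_val[OF U'(1) sh', of p \<phi>t] p by simp
      moreover have "inv_into U' \<phi>' y = p" using inv_into_f_f[OF injA[OF U'(1)]] p by simp
      ultimately show ?thesis by simp
    qed
    show "((\<lambda>y. l (\<phi>t (inv_into U' \<phi>' y))) has_derivative blinfun_apply (D x)) (at x)"
      unfolding Dap by (rule has_derivative_transform_within_open[OF d op x' ag])
  next
    have "continuous_on (\<phi>' ` (U' \<inter> U)) (\<lambda>x. (Blinfun l o\<^sub>L H' x) o\<^sub>L Blinfun e)"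
      by (intro bounded_bilinear.continuous_on[OF bounded_bilinear_blinfun_compose] continuous_on_const Hc)
    then show "continuous_on (\<phi>' ` (U \<inter> U')) D" unfolding D_def set .
  qed
qed

lemma UNIQ:
  assumes U: "(U,\<phi>)\<in>A" "\<eta>\<in>U" and V: "(V,\<psi>)\<in>A" "\<eta>\<in>V" and W: "(W,\<theta>)\<in>A" "\<eta>\<in>W"
    and f: "f 0 = \<eta>" "c1_near0 V \<psi> f" and g: "g 0 = \<eta>" "c1_near0 W \<theta> g"
    and eqt: "tangent_of T A \<eta> f = tangent_of T A \<eta> g"
  shows "blinfun_apply (trans_deriv T0 j V \<psi> U \<phi> \<eta>) (vector_derivative (\<lambda>t. \<psi> (f t)) (at 0)) =
         blinfun_apply (trans_deriv T0 j W \<theta> U \<phi> \<eta>) (vector_derivative (\<lambda>t. \<theta> (g t)) (at 0))"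
    (is "?a = ?b")
proof (rule ccontr)
  assume ne: "?a \<noteq> ?b"
  have "e ?a \<noteq> e ?b" using ne ie unfolding inj_def by blast
  hence "e (?a - ?b) \<noteq> 0" using linear_diff[OF bounded_linear.linear[OF be]] by simp
  then obtain l :: "'xt \<Rightarrow> real" where l: "bounded_linear l" "l (e (?a - ?b)) \<noteq> 0"
    using hahn_banach_nonzero by blast
  obtain Ut \<phi>t where sh: "(Ut,\<phi>t)\<in>At" "U = Ut \<inter> topspace T" "\<forall>p\<in>U. e (\<phi> p) = \<phi>t p"
    using shell_of[OF U(1)] by blast
  let ?F = "\<lambda>p. l (\<phi>t p)"
  have F: "?F \<in> test_fns T A \<eta>" by (rule TFmem[OF U sh l(1)])
  have d0: "((\<lambda>y. l (e y)) has_derivative (\<lambda>y. l (e y))) (at (\<phi> \<eta>))"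
    by (rule bounded_linear_imp_has_derivative[OF bounded_linear_compose[OF l(1) be]])
  have opU: "open (\<phi> ` U)" using chartA[OF U(1)] unfolding local_chart_def by blast
  have ag: "l (e y) = ?F (inv_into U \<phi> y)" if "y \<in> \<phi> ` U" for y
  proof -
    from that obtain p where p: "p \<in> U" "y = \<phi> p" by blast
    have "inv_into U \<phi> y = p" using inv_into_f_f[OF injA[OF U(1)]] p by simp
    then show ?thesis using sh(3) p by simp
  qed
  have dU: "((\<lambda>y. ?F (inv_into U \<phi> y)) has_derivative (\<lambda>y. l (e y))) (at (\<phi> \<eta>))"
    by (rule has_derivative_transform_within_open[OF d0 opU _ ag]) (use U in blast)
  have "tangent_of T A \<eta> f ?F = l (e ?a)" by (rule TANG[OF U V f F dU])
  moreover have "tangent_of T A \<eta> g ?F = l (e ?b)" by (rule TANG[OF U W g F dU])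
  ultimately have "l (e ?a) = l (e ?b)" using eqt by simp
  hence "l (e ?a - e ?b) = 0" using linear_diff[OF bounded_linear.linear[OF l(1)]] by simp
  then show False using l(2) linear_diff[OF bounded_linear.linear[OF be]] by simp
qed

lemma CD:
  assumes U: "(U,\<phi>)\<in>A" "\<eta>\<in>U" and fc: "c1_curve T0 j A \<eta> f"
    and V: "(V,\<psi>)\<in>A" "\<eta>\<in>V" and c: "c1_near0 V \<psi> f"
  shows "chart_deriv T T0 j A \<eta> U \<phi> (tangent_of T A \<eta> f) =
     blinfun_apply (trans_deriv T0 j V \<psi> U \<phi> \<eta>) (vector_derivative (\<lambda>t. \<psi> (f t)) (at 0))"
  unfolding chart_deriv_def
proof (rule the_equality)
  show "\<exists>fa Va \<psi>a. c1_curve T0 j A \<eta> fa \<and> tangent_of T A \<eta> fa = tangent_of T A \<eta> f \<and>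
      (Va, \<psi>a) \<in> A \<and> \<eta> \<in> Va \<and> c1_near0 Va \<psi>a fa \<and>
      blinfun_apply (trans_deriv T0 j V \<psi> U \<phi> \<eta>) (vector_derivative (\<lambda>t. \<psi> (f t)) (at 0)) =
      blinfun_apply (trans_deriv T0 j Va \<psi>a U \<phi> \<eta>) (vector_derivative (\<lambda>t. \<psi>a (fa t)) (at 0))"
    using fc V c by blast
next
  fix v assume "\<exists>fa Va \<psi>a. c1_curve T0 j A \<eta> fa \<and> tangent_of T A \<eta> fa = tangent_of T A \<eta> f \<and>
      (Va, \<psi>a) \<in> A \<and> \<eta> \<in> Va \<and> c1_near0 Va \<psi>a fa \<and>
      v = blinfun_apply (trans_deriv T0 j Va \<psi>a U \<phi> \<eta>) (vector_derivative (\<lambda>t. \<psi>a (fa t)) (at 0))"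
  then obtain g W \<theta> where g: "c1_curve T0 j A \<eta> g" "tangent_of T A \<eta> g = tangent_of T A \<eta> f"
    "(W, \<theta>) \<in> A" "\<eta> \<in> W" "c1_near0 W \<theta> g"
    "v = blinfun_apply (trans_deriv T0 j W \<theta> U \<phi> \<eta>) (vector_derivative (\<lambda>t. \<theta> (g t)) (at 0))" by blast
  have g0: "g 0 = \<eta>" using g(1) unfolding c1_curve_def by blast
  have f0: "f 0 = \<eta>" using fc unfolding c1_curve_def by blast
  show "v = blinfun_apply (trans_deriv T0 j V \<psi> U \<phi> \<eta>) (vector_derivative (\<lambda>t. \<psi> (f t)) (at 0))"
    using UNIQ[OF U g(3,4) V g0 g(5) f0 c g(2)] g(6) by simp
qed

end


context qdm begin

lemma C00:
  assumes U: "(U,\<phi>)\<in>A" "\<eta>\<in>U" and f0: "f 0 = \<eta>"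
    and c0: "c1_near0 (U \<inter> topspace T0) (chart0 j \<phi>) f"
  shows "c1_near0 U \<phi> f"
    and "\<And>V \<psi>. (V,\<psi>)\<in>A \<Longrightarrow> \<eta>\<in>V \<Longrightarrow> c1_near0 V \<psi> f \<Longrightarrow>
       vector_derivative (\<lambda>t. \<psi> (f t)) (at 0) =
       blinfun_apply (trans_deriv T0 j U \<phi> V \<psi> \<eta>) (vector_derivative (\<lambda>t. \<phi> (f t)) (at 0))"
proof -
  obtain \<epsilon> g' where \<epsilon>: "\<epsilon>>0" "f ` {-\<epsilon><..<\<epsilon>} \<subseteq> U \<inter> topspace T0"
    and gd: "\<forall>t\<in>{-\<epsilon><..<\<epsilon>}. ((\<lambda>t. chart0 j \<phi> (f t)) has_vector_derivative g' t) (at t)"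
    and gc: "continuous_on {-\<epsilon><..<\<epsilon>} g'"
    using c0 unfolding c1_near0_def by blast
  have phj: "\<phi> (f t) = j (chart0 j \<phi> (f t))" if "t \<in> {-\<epsilon><..<\<epsilon>}" for t
  proof -
    have "f t \<in> U \<inter> topspace T0" using \<epsilon>(2) that by blast
    then show ?thesis using j_chart0[OF U, of "f t"] by simp
  qed
  have dphi: "((\<lambda>t. \<phi> (f t)) has_vector_derivative j (g' t)) (at t)" if t: "t \<in> {-\<epsilon><..<\<epsilon>}" for t
  proof -
    have "((\<lambda>t. j (chart0 j \<phi> (f t))) has_vector_derivative j (g' t)) (at t)"
      using bounded_linear.has_vector_derivative[OF bj gd[rule_format, OF t]] .
    then show ?thesis
      by (rule has_vector_derivative_transform_within_open[OF _ open_greaterThanLessThan t]) (use phj in auto)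
  qed
  show c1: "c1_near0 U \<phi> f"
    unfolding c1_near0_def
  proof (intro exI[of _ \<epsilon>] conjI exI[of _ "\<lambda>t. j (g' t)"] ballI)
    show "\<epsilon> > 0" by fact
    show "f ` {-\<epsilon><..<\<epsilon>} \<subseteq> U" using \<epsilon>(2) by blast
    show "continuous_on {-\<epsilon><..<\<epsilon>} (\<lambda>t. j (g' t))" using bounded_linear.continuous_on[OF bj gc] .
  qed (rule dphi)
  have z0: "0 \<in> {-\<epsilon><..<\<epsilon>}" using \<epsilon>(1) by simp
  have vphi: "vector_derivative (\<lambda>t. \<phi> (f t)) (at 0) = j (g' 0)" by (rule vector_derivative_at[OF dphi[OF z0]])
  fix V \<psi> assume V: "(V,\<psi>)\<in>A" "\<eta>\<in>V" and cV: "c1_near0 V \<psi> f"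
  obtain \<epsilon>' where \<epsilon>': "\<epsilon>'>0" "f ` {-\<epsilon>'<..<\<epsilon>'} \<subseteq> V" using cV unfolding c1_near0_def by blast
  let ?TD = "blinfun_apply (trans_deriv T0 j U \<phi> V \<psi> \<eta>)"
  have c00: "chart0 j \<phi> (f 0) = chart0 j \<phi> \<eta>" using f0 by simp
  have d1: "((\<lambda>t. chart0 j \<phi> (f t)) has_derivative (\<lambda>s. s *\<^sub>R g' 0)) (at 0)"
    using gd z0 unfolding has_vector_derivative_def by blast
  have dT: "(trans_map j U \<phi> \<psi> has_derivative (\<lambda>h. ?TD (j h))) (at (chart0 j \<phi> (f 0)))"
    using TD_has[OF U V] c00 by simp
  have d2: "((\<lambda>t. trans_map j U \<phi> \<psi> (chart0 j \<phi> (f t))) has_derivative (\<lambda>s. ?TD (j (s *\<^sub>R g' 0)))) (at 0)"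
    using has_derivative_compose[OF d1 dT] .
  have lin: "(\<lambda>s. ?TD (j (s *\<^sub>R g' 0))) = (\<lambda>s. s *\<^sub>R ?TD (j (g' 0)))"
    by (simp add: fun_eq_iff blinfun.scaleR_right linear_scale[OF bounded_linear.linear[OF bj]])
  have d3: "((\<lambda>t. trans_map j U \<phi> \<psi> (chart0 j \<phi> (f t))) has_vector_derivative ?TD (j (g' 0))) (at 0)"
    using d2 lin unfolding has_vector_derivative_def by simp
  define \<delta> where "\<delta> = min \<epsilon> \<epsilon>'"
  have ag: "trans_map j U \<phi> \<psi> (chart0 j \<phi> (f t)) = \<psi> (f t)" if "t \<in> {-\<delta><..<\<delta>}" for t
  proof -
    have "t \<in> {-\<epsilon><..<\<epsilon>}" using that \<delta>_def by auto
    then have "f t \<in> U \<inter> topspace T0" using \<epsilon>(2) by blast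
    then show ?thesis using tm_val[OF U, of "f t" \<psi>] by simp
  qed
  have zd: "0 \<in> {-\<delta><..<\<delta>}" using \<epsilon>(1) \<epsilon>'(1) \<delta>_def by auto
  have "((\<lambda>t. \<psi> (f t)) has_vector_derivative ?TD (j (g' 0))) (at 0)"
    by (rule has_vector_derivative_transform_within_open[OF d3 open_greaterThanLessThan zd ag])
  then show "vector_derivative (\<lambda>t. \<psi> (f t)) (at 0) = ?TD (vector_derivative (\<lambda>t. \<phi> (f t)) (at 0))"
    unfolding vphi by (rule vector_derivative_at)
qed

lemma SURJ:
  assumes U: "(U,\<phi>)\<in>A" "\<eta>\<in>U"
  shows "\<exists>f. c1_curve T0 j A \<eta> f \<and> c1_near0 U \<phi> f \<and> vector_derivative (\<lambda>t. \<phi> (f t)) (at 0) = v"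
proof -
  have opU: "open (\<phi> ` U)" using chartA[OF U(1)] unfolding local_chart_def by blast
  obtain r where r: "r > 0" "ball (\<phi> \<eta>) r \<subseteq> \<phi> ` U" using opU U(2) open_contains_ball by blast
  define \<epsilon> where "\<epsilon> = r / (norm v + 1)"
  have nv: "norm v + 1 > 0" by (simp add: add_nonneg_pos)
  have \<epsilon>: "\<epsilon> > 0" unfolding \<epsilon>_def using r(1) nv by (rule divide_pos_pos)
  define f where "f t = inv_into U \<phi> (\<phi> \<eta> + t *\<^sub>R v)" for t
  let ?I = "{-\<epsilon><..<\<epsilon>}"
  have inI: "\<phi> \<eta> + t *\<^sub>R v \<in> \<phi> ` U" if "t \<in> ?I" for t
  proof -
    have "\<bar>t\<bar> < \<epsilon>" using that by auto
    hence "\<bar>t\<bar> * norm v \<le> \<epsilon> * norm v" by (simp add: mult_right_mono)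
    also have "\<dots> < \<epsilon> * (norm v + 1)" using \<epsilon> by simp
    also have "\<dots> = r" unfolding \<epsilon>_def using nv by simp
    finally have "dist (\<phi> \<eta>) (\<phi> \<eta> + t *\<^sub>R v) < r" by (simp add: dist_norm)
    then show ?thesis using r(2) by auto
  qed
  have fU: "f t \<in> U" if "t \<in> ?I" for t unfolding f_def using inI[OF that] by (simp add: inv_into_into)
  have phf: "\<phi> (f t) = \<phi> \<eta> + t *\<^sub>R v" if "t \<in> ?I" for t unfolding f_def using inI[OF that] by (simp add: f_inv_into_f)
  have f0: "f 0 = \<eta>" unfolding f_def using inv_into_f_f[OF injA[OF U(1)] U(2)] by simp
  have lin_d: "((\<lambda>t. \<phi> \<eta> + t *\<^sub>R v) has_vector_derivative v) (at t)" for t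
    by (auto intro!: derivative_eq_intros)
  have dphi: "((\<lambda>t. \<phi> (f t)) has_vector_derivative v) (at t)" if t: "t \<in> ?I" for t
    by (rule has_vector_derivative_transform_within_open[OF lin_d open_greaterThanLessThan t]) (use phf in auto)
  have z0: "0 \<in> ?I" using \<epsilon> by simp
  have c1: "c1_near0 U \<phi> f"
    unfolding c1_near0_def
    by (intro exI[of _ \<epsilon>] conjI exI[of _ "\<lambda>t. v"] ballI \<epsilon> continuous_on_const dphi) (use fU in auto)
  have vd: "vector_derivative (\<lambda>t. \<phi> (f t)) (at 0) = v" by (rule vector_derivative_at[OF dphi[OF z0]])
  have compat: "vector_derivative (\<lambda>t. \<psi> (f t)) (at 0) =
       blinfun_apply (trans_deriv T0 j U \<phi> V \<psi> \<eta>) v" if V: "(V,\<psi>)\<in>A" "\<eta>\<in>V" and cV: "c1_near0 V \<psi> f" for V \<psi>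
  proof -
    obtain \<epsilon>' g2 where \<epsilon>': "\<epsilon>'>0" "f ` {-\<epsilon>'<..<\<epsilon>'} \<subseteq> V"
      "\<forall>t\<in>{-\<epsilon>'<..<\<epsilon>'}. ((\<lambda>t. \<psi> (f t)) has_vector_derivative g2 t) (at t)"
      using cV unfolding c1_near0_def by blast
    have dpsi: "((\<lambda>t. \<psi> (f t)) has_vector_derivative g2 0) (at 0)" using \<epsilon>' by auto
    have dpsie: "((\<lambda>t. e (\<psi> (f t))) has_vector_derivative e (g2 0)) (at 0)"
      using bounded_linear.has_vector_derivative[OF be dpsi] .
    obtain Ut \<phi>t where sh: "(Ut,\<phi>t)\<in>At" "U = Ut \<inter> topspace T" "\<forall>p\<in>U. e (\<phi> p) = \<phi>t p"
      using shell_of[OF U(1)] by blast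
    obtain Vt \<psi>t where shV: "(Vt,\<psi>t)\<in>At" "V = Vt \<inter> topspace T" "\<forall>p\<in>V. e (\<psi> p) = \<psi>t p"
      using shell_of[OF V(1)] by blast
    let ?H = "trans_map e Ut \<phi>t \<psi>t"
    have fc: "frakC1 e (\<phi> ` (U \<inter> V)) ?H"
      using D5t[OF sh(1) shV(1)] U(2) V(2) sh(2) shV(2) sh_dom[OF U(1) sh V(1) shV(1,2)] by auto
    obtain H' where H': "\<And>x. x\<in>\<phi> ` (U \<inter> V) \<Longrightarrow> (?H has_derivative (\<lambda>h. blinfun_apply (H' x) (e h))) (at x)"
      using frakC1_hasderiv[OF fc sh_open[OF U(1) V(1)] be] by blast
    have KIe: "e (blinfun_apply (trans_deriv T0 j U \<phi> V \<psi> \<eta>) h) = blinfun_apply (H' (\<phi> \<eta>)) (e h)" for h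
      by (rule KI[OF U V sh shV H'])
    have dH: "(?H has_derivative (\<lambda>h. blinfun_apply (H' (\<phi> \<eta>)) (e h))) (at (\<phi> \<eta> + 0 *\<^sub>R v))"
      using H'[of "\<phi> \<eta>"] U V by simp
    have dl: "((\<lambda>t. \<phi> \<eta> + t *\<^sub>R v) has_derivative (\<lambda>s. s *\<^sub>R v)) (at 0)"
      using lin_d[of 0] unfolding has_vector_derivative_def .
    have d2: "((\<lambda>t. ?H (\<phi> \<eta> + t *\<^sub>R v)) has_derivative (\<lambda>s. blinfun_apply (H' (\<phi> \<eta>)) (e (s *\<^sub>R v)))) (at 0)"
      using has_derivative_compose[OF dl dH] .
    have lin: "(\<lambda>s. blinfun_apply (H' (\<phi> \<eta>)) (e (s *\<^sub>R v))) = (\<lambda>s. s *\<^sub>R blinfun_apply (H' (\<phi> \<eta>)) (e v))"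
      by (simp add: fun_eq_iff blinfun.scaleR_right linear_scale[OF bounded_linear.linear[OF be]])
    have d3: "((\<lambda>t. ?H (\<phi> \<eta> + t *\<^sub>R v)) has_vector_derivative blinfun_apply (H' (\<phi> \<eta>)) (e v)) (at 0)"
      using d2 lin unfolding has_vector_derivative_def by simp
    define \<delta> where "\<delta> = min \<epsilon> \<epsilon>'"
    have ag: "?H (\<phi> \<eta> + t *\<^sub>R v) = e (\<psi> (f t))" if "t \<in> {-\<delta><..<\<delta>}" for t
    proof -
      have tI: "t \<in> ?I" using that \<delta>_def by auto
      have "t \<in> {-\<epsilon>'<..<\<epsilon>'}" using that \<delta>_def by auto
      then have fV: "f t \<in> V" using \<epsilon>'(2) by blast
      have "?H (\<phi> \<eta> + t *\<^sub>R v) = ?H (\<phi> (f t))" using phf[OF tI] by simp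
      also have "\<dots> = \<psi>t (f t)" by (rule sh_val[OF U(1) sh fU[OF tI]])
      also have "\<dots> = e (\<psi> (f t))" using shV(3) fV by simp
      finally show ?thesis .
    qed
    have zd: "0 \<in> {-\<delta><..<\<delta>}" using \<epsilon> \<epsilon>'(1) \<delta>_def by auto
    have d4: "((\<lambda>t. e (\<psi> (f t))) has_vector_derivative blinfun_apply (H' (\<phi> \<eta>)) (e v)) (at 0)"
      by (rule has_vector_derivative_transform_within_open[OF d3 open_greaterThanLessThan zd ag])
    have "e (g2 0) = e (blinfun_apply (trans_deriv T0 j U \<phi> V \<psi> \<eta>) v)"
      using vector_derivative_unique_at[OF dpsie d4] KIe by simp
    hence "g2 0 = blinfun_apply (trans_deriv T0 j U \<phi> V \<psi> \<eta>) v" using ie unfolding inj_def by blast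
    then show ?thesis using vector_derivative_at[OF dpsi] by simp
  qed
  have "c1_curve T0 j A \<eta> f"
    unfolding c1_curve_def
  proof (intro conjI exI[of _ U] exI[of _ \<phi>] allI impI)
    show "f 0 = \<eta>" by fact
    show "(U, \<phi>) \<in> A" "\<eta> \<in> U" "c1_near0 U \<phi> f" using U c1 by auto
    fix V \<psi> assume "(V, \<psi>) \<in> A \<and> \<eta> \<in> V \<and> c1_near0 V \<psi> f"
    then show "vector_derivative (\<lambda>t. \<psi> (f t)) (at 0) =
          blinfun_apply (trans_deriv T0 j U \<phi> V \<psi> \<eta>) (vector_derivative (\<lambda>t. \<phi> (f t)) (at 0))"
      using compat vd by auto
  qed
  then show ?thesis using c1 vd by blast
qed

end
theorem lemma2p10:
  fixes T T0 T1 Tt :: "'p topology"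
    and A :: "('p set \<times> ('p \<Rightarrow> 'x::banach)) set"
    and j :: "'x0::banach \<Rightarrow> 'x"
    and j1 :: "'x1::banach \<Rightarrow> 'x0"
    and At :: "('p set \<times> ('p \<Rightarrow> 'xt::banach)) set"
    and e :: "'x \<Rightarrow> 'xt"
    and \<eta> :: 'p
  assumes "quasi_diff_manifold T A T0 j T1 j1 Tt At e"
    and "\<eta> \<in> topspace T0"
  shows
    "(\<forall>U \<phi>. (U, \<phi>) \<in> A \<and> \<eta> \<in> U \<longrightarrow>
       (\<forall>f g V \<psi> W \<theta>.
          c1_curve T0 j A \<eta> f \<and> c1_curve T0 j A \<eta> g \<and> tangent_of T A \<eta> f = tangent_of T A \<eta> g \<and>
          (V, \<psi>) \<in> A \<and> \<eta> \<in> V \<and> c1_near0 V \<psi> f \<and>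
          (W, \<theta>) \<in> A \<and> \<eta> \<in> W \<and> c1_near0 W \<theta> g \<longrightarrow>
          blinfun_apply (trans_deriv T0 j V \<psi> U \<phi> \<eta>) (vector_derivative (\<lambda>t. \<psi> (f t)) (at 0)) =
          blinfun_apply (trans_deriv T0 j W \<theta> U \<phi> \<eta>) (vector_derivative (\<lambda>t. \<theta> (g t)) (at 0))))
   \<and> (\<forall>U \<phi> V \<psi>. (U, \<phi>) \<in> A \<and> \<eta> \<in> U \<and> (V, \<psi>) \<in> A \<and> \<eta> \<in> V \<longrightarrow>
       (\<exists>C1>0. \<exists>C2>0. \<forall>\<upsilon>\<in>tangent_space00 T T0 j A \<eta>.
          norm (chart_deriv T T0 j A \<eta> V \<psi> \<upsilon>) \<le> C1 * norm (chart_deriv T T0 j A \<eta> U \<phi> \<upsilon>) \<and>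
          norm (chart_deriv T T0 j A \<eta> U \<phi> \<upsilon>) \<le> C2 * norm (chart_deriv T T0 j A \<eta> V \<psi> \<upsilon>)))
   \<and> (\<forall>U \<phi>. (U, \<phi>) \<in> A \<and> \<eta> \<in> U \<longrightarrow>
       bij_betw (chart_deriv T T0 j A \<eta> U \<phi>) (tangent_space T T0 j A \<eta>) UNIV)"
proof -
  interpret qdm T T0 T1 Tt A j j1 At e \<eta>
    by unfold_locales (rule assms(1), rule assms(2))
  have c1f0: "f 0 = \<eta>" if "c1_curve T0 j A \<eta> f" for f using that unfolding c1_curve_def by blast
  have P1: "\<forall>U \<phi>. (U, \<phi>) \<in> A \<and> \<eta> \<in> U \<longrightarrow>
       (\<forall>f g V \<psi> W \<theta>.
          c1_curve T0 j A \<eta> f \<and> c1_curve T0 j A \<eta> g \<and> tangent_of T A \<eta> f = tangent_of T A \<eta> g \<and>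
          (V, \<psi>) \<in> A \<and> \<eta> \<in> V \<and> c1_near0 V \<psi> f \<and>
          (W, \<theta>) \<in> A \<and> \<eta> \<in> W \<and> c1_near0 W \<theta> g \<longrightarrow>
          blinfun_apply (trans_deriv T0 j V \<psi> U \<phi> \<eta>) (vector_derivative (\<lambda>t. \<psi> (f t)) (at 0)) =
          blinfun_apply (trans_deriv T0 j W \<theta> U \<phi> \<eta>) (vector_derivative (\<lambda>t. \<theta> (g t)) (at 0)))"
  proof (intro allI impI)
    fix U \<phi> f g V \<psi> W \<theta>
    assume U: "(U, \<phi>) \<in> A \<and> \<eta> \<in> U" and H: "c1_curve T0 j A \<eta> f \<and> c1_curve T0 j A \<eta> g \<and> tangent_of T A \<eta> f = tangent_of T A \<eta> g \<and>
          (V, \<psi>) \<in> A \<and> \<eta> \<in> V \<and> c1_near0 V \<psi> f \<and>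
          (W, \<theta>) \<in> A \<and> \<eta> \<in> W \<and> c1_near0 W \<theta> g"
    then show "blinfun_apply (trans_deriv T0 j V \<psi> U \<phi> \<eta>) (vector_derivative (\<lambda>t. \<psi> (f t)) (at 0)) =
          blinfun_apply (trans_deriv T0 j W \<theta> U \<phi> \<eta>) (vector_derivative (\<lambda>t. \<theta> (g t)) (at 0))"
      using UNIQ[of U \<phi> V \<psi> W \<theta> f g] c1f0 by blast
  qed
  have P2: "\<forall>U \<phi> V \<psi>. (U, \<phi>) \<in> A \<and> \<eta> \<in> U \<and> (V, \<psi>) \<in> A \<and> \<eta> \<in> V \<longrightarrow>
       (\<exists>C1>0. \<exists>C2>0. \<forall>\<upsilon>\<in>tangent_space00 T T0 j A \<eta>.
          norm (chart_deriv T T0 j A \<eta> V \<psi> \<upsilon>) \<le> C1 * norm (chart_deriv T T0 j A \<eta> U \<phi> \<upsilon>) \<and>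
          norm (chart_deriv T T0 j A \<eta> U \<phi> \<upsilon>) \<le> C2 * norm (chart_deriv T T0 j A \<eta> V \<psi> \<upsilon>))"
  proof (intro allI impI)
    fix U \<phi> V \<psi> assume "(U, \<phi>) \<in> A \<and> \<eta> \<in> U \<and> (V, \<psi>) \<in> A \<and> \<eta> \<in> V"
    then have U: "(U, \<phi>) \<in> A" "\<eta> \<in> U" and V: "(V, \<psi>) \<in> A" "\<eta> \<in> V" by auto
    let ?B1 = "trans_deriv T0 j U \<phi> V \<psi> \<eta>" and ?B2 = "trans_deriv T0 j V \<psi> U \<phi> \<eta>"
    have key: "norm (chart_deriv T T0 j A \<eta> V \<psi> v) \<le> (norm ?B1 + 1) * norm (chart_deriv T T0 j A \<eta> U \<phi> v) \<and>
          norm (chart_deriv T T0 j A \<eta> U \<phi> v) \<le> (norm ?B2 + 1) * norm (chart_deriv T T0 j A \<eta> V \<psi> v)"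
      if v: "v \<in> tangent_space00 T T0 j A \<eta>" for v
    proof -
      obtain f where f: "v = tangent_of T A \<eta> f" "f 0 = \<eta>"
        "\<forall>U \<phi>. (U, \<phi>) \<in> A \<and> \<eta> \<in> U \<longrightarrow> c1_near0 (U \<inter> topspace T0) (chart0 j \<phi>) f"
        using v unfolding tangent_space00_def by blast
      have cU: "c1_near0 (U \<inter> topspace T0) (chart0 j \<phi>) f" using f(3) U by blast
      have cV: "c1_near0 (V \<inter> topspace T0) (chart0 j \<psi>) f" using f(3) V by blast
      have c1U: "c1_near0 U \<phi> f" by (rule C00(1)[OF U f(2) cU])
      have c1V: "c1_near0 V \<psi> f" by (rule C00(1)[OF V f(2) cV])
      have curve: "c1_curve T0 j A \<eta> f"
        unfolding c1_curve_def
      proof (intro conjI exI[of _ U] exI[of _ \<phi>] allI impI)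
        show "f 0 = \<eta>" "(U, \<phi>) \<in> A" "\<eta> \<in> U" "c1_near0 U \<phi> f" using f(2) U c1U by auto
        fix V' \<psi>' assume "(V', \<psi>') \<in> A \<and> \<eta> \<in> V' \<and> c1_near0 V' \<psi>' f"
        then show "vector_derivative (\<lambda>t. \<psi>' (f t)) (at 0) =
          blinfun_apply (trans_deriv T0 j U \<phi> V' \<psi>' \<eta>) (vector_derivative (\<lambda>t. \<phi> (f t)) (at 0))"
          using C00(2)[OF U f(2) cU] by blast
      qed
      let ?wU = "vector_derivative (\<lambda>t. \<phi> (f t)) (at 0)"
      let ?wV = "vector_derivative (\<lambda>t. \<psi> (f t)) (at 0)"
      have a1: "chart_deriv T T0 j A \<eta> U \<phi> v = ?wU"
        using CD[OF U curve U c1U] TD_id[OF U] f(1) by simp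
      have a2: "chart_deriv T T0 j A \<eta> V \<psi> v = blinfun_apply ?B1 ?wU"
        using CD[OF V curve U c1U] f(1) by simp
      have b1: "chart_deriv T T0 j A \<eta> V \<psi> v = ?wV"
        using CD[OF V curve V c1V] TD_id[OF V] f(1) by simp
      have b2: "chart_deriv T T0 j A \<eta> U \<phi> v = blinfun_apply ?B2 ?wV"
        using CD[OF U curve V c1V] f(1) by simp
      have n1: "norm (blinfun_apply ?B1 ?wU) \<le> (norm ?B1 + 1) * norm ?wU"
        by (rule order_trans[OF norm_blinfun mult_right_mono]) simp_all
      have n2: "norm (blinfun_apply ?B2 ?wV) \<le> (norm ?B2 + 1) * norm ?wV"
        by (rule order_trans[OF norm_blinfun mult_right_mono]) simp_all
      show ?thesis using a1 a2 b1 b2 n1 n2 by metis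
    qed
    have p1: "norm ?B1 + 1 > 0" and p2: "norm ?B2 + 1 > 0" by (simp_all add: add_nonneg_pos)
    show "\<exists>C1>0. \<exists>C2>0. \<forall>\<upsilon>\<in>tangent_space00 T T0 j A \<eta>.
          norm (chart_deriv T T0 j A \<eta> V \<psi> \<upsilon>) \<le> C1 * norm (chart_deriv T T0 j A \<eta> U \<phi> \<upsilon>) \<and>
          norm (chart_deriv T T0 j A \<eta> U \<phi> \<upsilon>) \<le> C2 * norm (chart_deriv T T0 j A \<eta> V \<psi> \<upsilon>)"
      using key p1 p2 by blast
  qed
  have P3: "\<forall>U \<phi>. (U, \<phi>) \<in> A \<and> \<eta> \<in> U \<longrightarrow>
       bij_betw (chart_deriv T T0 j A \<eta> U \<phi>) (tangent_space T T0 j A \<eta>) UNIV"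
  proof (intro allI impI)
    fix U \<phi> assume "(U, \<phi>) \<in> A \<and> \<eta> \<in> U"
    then have U: "(U, \<phi>) \<in> A" "\<eta> \<in> U" by auto
    have cdf: "\<exists>V \<psi>. (V,\<psi>)\<in>A \<and> \<eta>\<in>V \<and> c1_near0 V \<psi> f \<and>
        chart_deriv T T0 j A \<eta> U \<phi> (tangent_of T A \<eta> f) =
        blinfun_apply (trans_deriv T0 j V \<psi> U \<phi> \<eta>) (vector_derivative (\<lambda>t. \<psi> (f t)) (at 0))"
      if fc: "c1_curve T0 j A \<eta> f" for f
    proof -
      obtain V \<psi> where V: "(V,\<psi>)\<in>A" "\<eta>\<in>V" "c1_near0 V \<psi> f" using fc unfolding c1_curve_def by blast
      show ?thesis using CD[OF U fc V] V by blast
    qed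
    have inj: "inj_on (chart_deriv T T0 j A \<eta> U \<phi>) (tangent_space T T0 j A \<eta>)"
    proof (rule inj_onI)
      fix v1 v2 assume v1: "v1 \<in> tangent_space T T0 j A \<eta>" and v2: "v2 \<in> tangent_space T T0 j A \<eta>"
        and eq: "chart_deriv T T0 j A \<eta> U \<phi> v1 = chart_deriv T T0 j A \<eta> U \<phi> v2"
      obtain f where f: "v1 = tangent_of T A \<eta> f" "c1_curve T0 j A \<eta> f" using v1 unfolding tangent_space_def by blast
      obtain g where g: "v2 = tangent_of T A \<eta> g" "c1_curve T0 j A \<eta> g" using v2 unfolding tangent_space_def by blast
      obtain V1 \<psi>1 where V1: "(V1,\<psi>1)\<in>A" "\<eta>\<in>V1" "c1_near0 V1 \<psi>1 f"
        and cd1: "chart_deriv T T0 j A \<eta> U \<phi> (tangent_of T A \<eta> f) =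
        blinfun_apply (trans_deriv T0 j V1 \<psi>1 U \<phi> \<eta>) (vector_derivative (\<lambda>t. \<psi>1 (f t)) (at 0))"
        using cdf[OF f(2)] by blast
      obtain V2 \<psi>2 where V2: "(V2,\<psi>2)\<in>A" "\<eta>\<in>V2" "c1_near0 V2 \<psi>2 g"
        and cd2: "chart_deriv T T0 j A \<eta> U \<phi> (tangent_of T A \<eta> g) =
        blinfun_apply (trans_deriv T0 j V2 \<psi>2 U \<phi> \<eta>) (vector_derivative (\<lambda>t. \<psi>2 (g t)) (at 0))"
        using cdf[OF g(2)] by blast
      have ab: "blinfun_apply (trans_deriv T0 j V1 \<psi>1 U \<phi> \<eta>) (vector_derivative (\<lambda>t. \<psi>1 (f t)) (at 0)) =
          blinfun_apply (trans_deriv T0 j V2 \<psi>2 U \<phi> \<eta>) (vector_derivative (\<lambda>t. \<psi>2 (g t)) (at 0))"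
        using eq cd1 cd2 f(1) g(1) by simp
      have "tangent_of T A \<eta> f F = tangent_of T A \<eta> g F" for F
      proof (cases "F \<in> test_fns T A \<eta>")
        case True
        obtain LU where dU: "((\<lambda>y. F (inv_into U \<phi> y)) has_derivative LU) (at (\<phi> \<eta>))"
          using TF_deriv[OF True U] by blast
        show ?thesis
          using TANG[OF U V1(1,2) c1f0[OF f(2)] V1(3) True dU] TANG[OF U V2(1,2) c1f0[OF g(2)] V2(3) True dU] ab
          by simp
      next
        case False
        then show ?thesis unfolding tangent_of_def by simp
      qed
      then show "v1 = v2" using f(1) g(1) by auto
    qed
    have surj: "chart_deriv T T0 j A \<eta> U \<phi> ` tangent_space T T0 j A \<eta> = UNIV"
    proof (rule set_eqI, rule iffI)
      fix v :: 'x assume "v \<in> UNIV"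
      obtain f where f: "c1_curve T0 j A \<eta> f" "c1_near0 U \<phi> f" "vector_derivative (\<lambda>t. \<phi> (f t)) (at 0) = v"
        using SURJ[OF U] by blast
      have "chart_deriv T T0 j A \<eta> U \<phi> (tangent_of T A \<eta> f) = v"
        using CD[OF U f(1) U f(2)] TD_id[OF U] f(3) by simp
      moreover have "tangent_of T A \<eta> f \<in> tangent_space T T0 j A \<eta>" unfolding tangent_space_def using f(1) by blast
      ultimately show "v \<in> chart_deriv T T0 j A \<eta> U \<phi> ` tangent_space T T0 j A \<eta>" by (metis image_eqI)
    qed simp
    show "bij_betw (chart_deriv T T0 j A \<eta> U \<phi>) (tangent_space T T0 j A \<eta>) UNIV"
      unfolding bij_betw_def using inj surj by blast
  qed
  show ?thesis using P1 P2 P3 by blast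
qed


end
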